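(* Let $(\mathbb{X}, \otimes, K)$ be a differential category with coalgebra modality $(!, \delta, \varepsilon, \Delta, \mathsf{e})$ and deriving transformation $\mathsf{d}_A:!(A)\otimes A\to !(A)$, and let $(\mathsf{T}, \mu, \eta, \mathsf{n}, \mathsf{n}_{K})$ be a symmetric comonoidal monad on $(\mathbb{X}, \otimes, K)$ whose underlying endofunctor is additive. Then the following are in bijective correspondence: (1) Differential mixed distributive laws of $(\mathsf{T}, \mu, \eta, \mathsf{n}, \mathsf{n}_{K})$ over $(!, \delta, \varepsilon, \Delta, \mathsf{e}, \mathsf{d})$; (2) Liftings of $\mathsf{d}$ to $(\mathbb{X}^\mathsf{T}, \otimes^{\mathsf{n}}, (K,\mathsf{n}_K))$, that is, deriving transformations $\tilde{\mathsf{d}}$ for the lifted coalgebra modality $(\tilde{!}, \tilde{\delta}, \tilde{\varepsilon}, \tilde{\Delta}, \tilde{\mathsf{e}})$ on $(\mathbb{X}^\mathsf{T}, \otimes^{\mathsf{n}}, (K,\mathsf{n}_K))$ induced by the corresponding coalgebra mixed distributive law, such that for every $\mathsf{T}$-algebra $(A, \nu)$ the underlying map of $\tilde{\mathsf{d}}_{(A, \nu)}$ is $\mathsf{d}_A$. Consequently, if $\lambda$ is a differential mixed distributive law, then $(\mathbb{X}^\mathsf{T}, \otimes^{\mathsf{n}}, (K,\mathsf{n}_K))$ is a differential category with coalgebra modality $(\tilde{!}, \tilde{\delta}, \tilde{\varepsilon}, \tilde{\Delta}, \tilde{\mathsf{e}})$ and deriving transformation $\tilde{\mathsf{d}}$.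
   Context: Composition is in diagrammatic order. An additive symmetric monoidal category has hom-sets that are commutative monoids with composition and $\otimes$ preserving $+$ and $0$; an additive functor preserves $+$ and $0$ strictly. A differential category is an additive symmetric monoidal category with a coalgebra modality $(!,\delta,\varepsilon,\Delta,\mathsf{e})$ (a comonad with natural cocommutative comonoids $(!(A),\Delta_A,\mathsf{e}_A)$ such that $\delta_A$ is a comonoid morphism) and a deriving transformation $\mathsf{d}_A:!(A)\otimes A\to!(A)$ satisfying the axioms of Blute, Cockett and Seely. A symmetric comonoidal monad $(\mathsf{T},\mu,\eta,\mathsf{n},\mathsf{n}_K)$ has oplax structure $\mathsf{n}_{A,B}:\mathsf{T}(A\otimes B)\to\mathsf{T}(A)\otimes\mathsf{T}(B)$, $\mathsf{n}_K:\mathsf{T}(K)\to K$; $\mathbb{X}^\mathsf{T}$ has $(A,\nu)\otimes^\mathsf{n}(B,\nu')=(A\otimes B,\mathsf{n}_{A,B};(\nu\otimes\nu'))$ and unit $(K,\mathsf{n}_K)$, and is additive symmetric monoidal when $\mathsf{T}$ is additive. A coalgebra mixed distributive law is a natural $\lambda_A:\mathsf{T}!(A)\to!\mathsf{T}(A)$ with $\mu_{!(A)};\lambda_A=\mathsf{T}(\lambda_A);\lambda_{\mathsf{T}(A)};!(\mu_A)$, $\eta_{!(A)};\lambda_A=!(\eta_A)$, $\mathsf{T}(\delta_A);\lambda_{!(A)};!(\lambda_A)=\lambda_A;\delta_{\mathsf{T}(A)}$, $\lambda_A;\varepsilon_{\mathsf{T}(A)}=\mathsf{T}(\varepsilon_A)$,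 $\mathsf{T}(\Delta_A);\mathsf{n}_{!(A),!(A)};(\lambda_A\otimes\lambda_A)=\lambda_A;\Delta_{\mathsf{T}(A)}$, $\mathsf{T}(\mathsf{e}_A);\mathsf{n}_K=\lambda_A;\mathsf{e}_{\mathsf{T}(A)}$; it lifts the coalgebra modality via $\tilde{!}(A,\nu)=(!(A),\lambda_A;!(\nu))$. It is a differential mixed distributive law if moreover $\mathsf{n}_{!(A),A};(\lambda_A\otimes1_{\mathsf{T}(A)});\mathsf{d}_{\mathsf{T}(A)}=\mathsf{T}(\mathsf{d}_A);\lambda_A$. *)

theory Defs
  imports "HOL-Library.FuncSet"
begin

text \<open>Categories are represented by a set of objects, hom-sets (which may overlap;
  this is needed so that the Eilenberg-Moore category can reuse the morphisms of the
  base category), composition in DIAGRAMMATIC order (cmp C f g = f;g), identities,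
  and the additive symmetric monoidal data.\<close>

record ('o,'m) smcat =
  Obj  :: "'o set"
  Hom  :: "'o \<Rightarrow> 'o \<Rightarrow> 'm set"
  cmp  :: "'m \<Rightarrow> 'm \<Rightarrow> 'm"
  idn  :: "'o \<Rightarrow> 'm"
  tns  :: "'o \<Rightarrow> 'o \<Rightarrow> 'o"
  tnsm :: "'m \<Rightarrow> 'm \<Rightarrow> 'm"
  unt  :: "'o"
  asc  :: "'o \<Rightarrow> 'o \<Rightarrow> 'o \<Rightarrow> 'm"   \<comment> \<open>(A\<otimes>B)\<otimes>C \<rightarrow> A\<otimes>(B\<otimes>C)\<close>
  lun  :: "'o \<Rightarrow> 'm"
  run  :: "'o \<Rightarrow> 'm"
  brd  :: "'o \<Rightarrow> 'o \<Rightarrow> 'm"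
  zro  :: "'o \<Rightarrow> 'o \<Rightarrow> 'm"
  pls  :: "'m \<Rightarrow> 'm \<Rightarrow> 'm"

definition category :: "('o,'m) smcat \<Rightarrow> bool" where
  "category C \<longleftrightarrow>
     (\<forall>A B. Hom C A B \<noteq> {} \<longrightarrow> A \<in> Obj C \<and> B \<in> Obj C) \<and>
     (\<forall>A\<in>Obj C. idn C A \<in> Hom C A A) \<and>
     (\<forall>A B D f g. f \<in> Hom C A B \<longrightarrow> g \<in> Hom C B D \<longrightarrow> cmp C f g \<in> Hom C A D) \<and>
     (\<forall>A B f. f \<in> Hom C A B \<longrightarrow> cmp C (idn C A) f = f \<and> cmp C f (idn C B) = f) \<and>
     (\<forall>A B D E f g h. f \<in> Hom C A B \<longrightarrow> g \<in> Hom C B D \<longrightarrow> h \<in> Hom C D E \<longrightarrow>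
        cmp C (cmp C f g) h = cmp C f (cmp C g h))"

definition iso_in :: "('o,'m) smcat \<Rightarrow> 'o \<Rightarrow> 'o \<Rightarrow> 'm \<Rightarrow> bool" where
  "iso_in C A B f \<longleftrightarrow> f \<in> Hom C A B \<and>
     (\<exists>g\<in>Hom C B A. cmp C f g = idn C A \<and> cmp C g f = idn C B)"

definition inv_in :: "('o,'m) smcat \<Rightarrow> 'o \<Rightarrow> 'o \<Rightarrow> 'm \<Rightarrow> 'm" where
  "inv_in C A B f = (THE g. g \<in> Hom C B A \<and> cmp C f g = idn C A \<and> cmp C g f = idn C B)"

definition asc_inv :: "('o,'m) smcat \<Rightarrow> 'o \<Rightarrow> 'o \<Rightarrow> 'o \<Rightarrow> 'm" where
  "asc_inv C A B D = inv_in C (tns C (tns C A B) D) (tns C A (tns C B D)) (asc C A B D)"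

definition functor_on :: "('o,'m) smcat \<Rightarrow> ('o \<Rightarrow> 'o) \<Rightarrow> ('m \<Rightarrow> 'm) \<Rightarrow> bool" where
  "functor_on C Fo Fm \<longleftrightarrow>
     (\<forall>A\<in>Obj C. Fo A \<in> Obj C) \<and>
     (\<forall>A B f. f \<in> Hom C A B \<longrightarrow> Fm f \<in> Hom C (Fo A) (Fo B)) \<and>
     (\<forall>A\<in>Obj C. Fm (idn C A) = idn C (Fo A)) \<and>
     (\<forall>A B D f g. f \<in> Hom C A B \<longrightarrow> g \<in> Hom C B D \<longrightarrow> Fm (cmp C f g) = cmp C (Fm f) (Fm g))"

definition additive_functor :: "('o,'m) smcat \<Rightarrow> ('o \<Rightarrow> 'o) \<Rightarrow> ('m \<Rightarrow> 'm) \<Rightarrow> bool" where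
  "additive_functor C Fo Fm \<longleftrightarrow> functor_on C Fo Fm \<and>
     (\<forall>A B f g. f \<in> Hom C A B \<longrightarrow> g \<in> Hom C A B \<longrightarrow> Fm (pls C f g) = pls C (Fm f) (Fm g)) \<and>
     (\<forall>A\<in>Obj C. \<forall>B\<in>Obj C. Fm (zro C A B) = zro C (Fo A) (Fo B))"

definition nat_trans :: "('o,'m) smcat \<Rightarrow> ('o \<Rightarrow> 'o) \<Rightarrow> ('m \<Rightarrow> 'm) \<Rightarrow> ('o \<Rightarrow> 'o) \<Rightarrow> ('m \<Rightarrow> 'm)
    \<Rightarrow> ('o \<Rightarrow> 'm) \<Rightarrow> bool" where
  "nat_trans C Fo Fm Go Gm \<theta> \<longleftrightarrow>
     (\<forall>A\<in>Obj C. \<theta> A \<in> Hom C (Fo A) (Go A)) \<and>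
     (\<forall>A B f. f \<in> Hom C A B \<longrightarrow> cmp C (\<theta> A) (Gm f) = cmp C (Fm f) (\<theta> B))"

definition smc :: "('o,'m) smcat \<Rightarrow> bool" where
  "smc C \<longleftrightarrow> category C \<and> unt C \<in> Obj C \<and>
     (\<forall>A\<in>Obj C. \<forall>B\<in>Obj C. tns C A B \<in> Obj C) \<and>
     (\<forall>A B D E f g. f \<in> Hom C A B \<longrightarrow> g \<in> Hom C D E \<longrightarrow>
        tnsm C f g \<in> Hom C (tns C A D) (tns C B E)) \<and>
     (\<forall>A\<in>Obj C. \<forall>B\<in>Obj C. tnsm C (idn C A) (idn C B) = idn C (tns C A B)) \<and>
     (\<forall>A B D A' B' D' f g f' g'. f \<in> Hom C A B \<longrightarrow> g \<in> Hom C B D \<longrightarrow>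
        f' \<in> Hom C A' B' \<longrightarrow> g' \<in> Hom C B' D' \<longrightarrow>
        tnsm C (cmp C f g) (cmp C f' g') = cmp C (tnsm C f f') (tnsm C g g')) \<and>
     (\<forall>A\<in>Obj C. \<forall>B\<in>Obj C. \<forall>D\<in>Obj C.
        iso_in C (tns C (tns C A B) D) (tns C A (tns C B D)) (asc C A B D)) \<and>
     (\<forall>A\<in>Obj C. iso_in C (tns C (unt C) A) A (lun C A)) \<and>
     (\<forall>A\<in>Obj C. iso_in C (tns C A (unt C)) A (run C A)) \<and>
     (\<forall>A\<in>Obj C. \<forall>B\<in>Obj C. brd C A B \<in> Hom C (tns C A B) (tns C B A)) \<and>
     (\<forall>A A' B B' D D' f g h. f \<in> Hom C A A' \<longrightarrow> g \<in> Hom C B B' \<longrightarrow> h \<in> Hom C D D' \<longrightarrow>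
        cmp C (asc C A B D) (tnsm C f (tnsm C g h)) = cmp C (tnsm C (tnsm C f g) h) (asc C A' B' D')) \<and>
     (\<forall>A B f. f \<in> Hom C A B \<longrightarrow>
        cmp C (lun C A) f = cmp C (tnsm C (idn C (unt C)) f) (lun C B)) \<and>
     (\<forall>A B f. f \<in> Hom C A B \<longrightarrow>
        cmp C (run C A) f = cmp C (tnsm C f (idn C (unt C))) (run C B)) \<and>
     (\<forall>A A' B B' f g. f \<in> Hom C A A' \<longrightarrow> g \<in> Hom C B B' \<longrightarrow>
        cmp C (brd C A B) (tnsm C g f) = cmp C (tnsm C f g) (brd C A' B')) \<and>
     (\<forall>A\<in>Obj C. \<forall>B\<in>Obj C. \<forall>D\<in>Obj C. \<forall>E\<in>Obj C.
        cmp C (asc C (tns C A B) D E) (asc C A B (tns C D E)) =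
        cmp C (tnsm C (asc C A B D) (idn C E))
          (cmp C (asc C A (tns C B D) E) (tnsm C (idn C A) (asc C B D E)))) \<and>
     (\<forall>A\<in>Obj C. \<forall>B\<in>Obj C.
        cmp C (asc C A (unt C) B) (tnsm C (idn C A) (lun C B)) = tnsm C (run C A) (idn C B)) \<and>
     (\<forall>A\<in>Obj C. \<forall>B\<in>Obj C. \<forall>D\<in>Obj C.
        cmp C (asc C A B D) (cmp C (brd C A (tns C B D)) (asc C B D A)) =
        cmp C (tnsm C (brd C A B) (idn C D))
          (cmp C (asc C B A D) (tnsm C (idn C B) (brd C A D)))) \<and>
     (\<forall>A\<in>Obj C. \<forall>B\<in>Obj C. cmp C (brd C A B) (brd C B A) = idn C (tns C A B))"

definition additive :: "('o,'m) smcat \<Rightarrow> bool" where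
  "additive C \<longleftrightarrow>
     (\<forall>A\<in>Obj C. \<forall>B\<in>Obj C. zro C A B \<in> Hom C A B) \<and>
     (\<forall>A B f g. f \<in> Hom C A B \<longrightarrow> g \<in> Hom C A B \<longrightarrow> pls C f g \<in> Hom C A B) \<and>
     (\<forall>A B f g h. f \<in> Hom C A B \<longrightarrow> g \<in> Hom C A B \<longrightarrow> h \<in> Hom C A B \<longrightarrow>
        pls C (pls C f g) h = pls C f (pls C g h)) \<and>
     (\<forall>A B f g. f \<in> Hom C A B \<longrightarrow> g \<in> Hom C A B \<longrightarrow> pls C f g = pls C g f) \<and>
     (\<forall>A B f. f \<in> Hom C A B \<longrightarrow> pls C f (zro C A B) = f) \<and>
     (\<forall>A B D f g g'. f \<in> Hom C A B \<longrightarrow> g \<in> Hom C B D \<longrightarrow> g' \<in> Hom C B D \<longrightarrow>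
        cmp C f (pls C g g') = pls C (cmp C f g) (cmp C f g')) \<and>
     (\<forall>A B D f. f \<in> Hom C A B \<longrightarrow> D \<in> Obj C \<longrightarrow> cmp C f (zro C B D) = zro C A D) \<and>
     (\<forall>A B D g g' h. g \<in> Hom C A B \<longrightarrow> g' \<in> Hom C A B \<longrightarrow> h \<in> Hom C B D \<longrightarrow>
        cmp C (pls C g g') h = pls C (cmp C g h) (cmp C g' h)) \<and>
     (\<forall>A B D h. h \<in> Hom C B D \<longrightarrow> A \<in> Obj C \<longrightarrow> cmp C (zro C A B) h = zro C A D) \<and>
     (\<forall>A B D E f g g'. f \<in> Hom C A B \<longrightarrow> g \<in> Hom C D E \<longrightarrow> g' \<in> Hom C D E \<longrightarrow>
        tnsm C f (pls C g g') = pls C (tnsm C f g) (tnsm C f g') \<and>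
        tnsm C (pls C g g') f = pls C (tnsm C g f) (tnsm C g' f)) \<and>
     (\<forall>A B D E f. f \<in> Hom C A B \<longrightarrow> D \<in> Obj C \<longrightarrow> E \<in> Obj C \<longrightarrow>
        tnsm C f (zro C D E) = zro C (tns C A D) (tns C B E) \<and>
        tnsm C (zro C D E) f = zro C (tns C D A) (tns C E B))"

definition additive_smc :: "('o,'m) smcat \<Rightarrow> bool" where
  "additive_smc C \<longleftrightarrow> smc C \<and> additive C"

text \<open>Coalgebra modality (!, \<delta>, \<epsilon>, \<Delta>, e): Bo/Bm the object/morphism part of !.\<close>
definition coalgebra_modality :: "('o,'m) smcat \<Rightarrow> ('o \<Rightarrow> 'o) \<Rightarrow> ('m \<Rightarrow> 'm) \<Rightarrow>
    ('o \<Rightarrow> 'm) \<Rightarrow> ('o \<Rightarrow> 'm) \<Rightarrow> ('o \<Rightarrow> 'm) \<Rightarrow> ('o \<Rightarrow> 'm) \<Rightarrow> bool" where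
  "coalgebra_modality C Bo Bm dl ep De ee \<longleftrightarrow>
     functor_on C Bo Bm \<and>
     nat_trans C Bo Bm (\<lambda>A. Bo (Bo A)) (\<lambda>f. Bm (Bm f)) dl \<and>
     nat_trans C Bo Bm (\<lambda>A. A) (\<lambda>f. f) ep \<and>
     nat_trans C Bo Bm (\<lambda>A. tns C (Bo A) (Bo A)) (\<lambda>f. tnsm C (Bm f) (Bm f)) De \<and>
     nat_trans C Bo Bm (\<lambda>A. unt C) (\<lambda>f. idn C (unt C)) ee \<and>
     (\<forall>A\<in>Obj C.
        cmp C (dl A) (dl (Bo A)) = cmp C (dl A) (Bm (dl A)) \<and>
        cmp C (dl A) (ep (Bo A)) = idn C (Bo A) \<and>
        cmp C (dl A) (Bm (ep A)) = idn C (Bo A) \<and>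
        cmp C (De A) (cmp C (tnsm C (De A) (idn C (Bo A))) (asc C (Bo A) (Bo A) (Bo A))) =
          cmp C (De A) (tnsm C (idn C (Bo A)) (De A)) \<and>
        cmp C (De A) (cmp C (tnsm C (ee A) (idn C (Bo A))) (lun C (Bo A))) = idn C (Bo A) \<and>
        cmp C (De A) (cmp C (tnsm C (idn C (Bo A)) (ee A)) (run C (Bo A))) = idn C (Bo A) \<and>
        cmp C (De A) (brd C (Bo A) (Bo A)) = De A \<and>
        cmp C (dl A) (De (Bo A)) = cmp C (De A) (tnsm C (dl A) (dl A)) \<and>
        cmp C (dl A) (ee (Bo A)) = ee A)"

text \<open>Deriving transformation d_A : !A \<otimes> A \<rightarrow> !A with axioms [d.1]-[d.5]
  (constant, Leibniz, linear, chain, interchange rules).\<close>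
definition deriving_transformation :: "('o,'m) smcat \<Rightarrow> ('o \<Rightarrow> 'o) \<Rightarrow> ('m \<Rightarrow> 'm) \<Rightarrow>
    ('o \<Rightarrow> 'm) \<Rightarrow> ('o \<Rightarrow> 'm) \<Rightarrow> ('o \<Rightarrow> 'm) \<Rightarrow> ('o \<Rightarrow> 'm) \<Rightarrow> ('o \<Rightarrow> 'm) \<Rightarrow> bool" where
  "deriving_transformation C Bo Bm dl ep De ee d \<longleftrightarrow>
     nat_trans C (\<lambda>A. tns C (Bo A) A) (\<lambda>f. tnsm C (Bm f) f) Bo Bm d \<and>
     (\<forall>A\<in>Obj C.
        cmp C (d A) (ee A) = zro C (tns C (Bo A) A) (unt C) \<and>
        cmp C (d A) (De A) =
          pls C (cmp C (tnsm C (De A) (idn C A))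
                   (cmp C (asc C (Bo A) (Bo A) A) (tnsm C (idn C (Bo A)) (d A))))
                (cmp C (tnsm C (De A) (idn C A))
                   (cmp C (asc C (Bo A) (Bo A) A)
                     (cmp C (tnsm C (idn C (Bo A)) (brd C (Bo A) A))
                       (cmp C (asc_inv C (Bo A) A (Bo A)) (tnsm C (d A) (idn C (Bo A))))))) \<and>
        cmp C (d A) (ep A) = cmp C (tnsm C (ee A) (idn C A)) (lun C A) \<and>
        cmp C (d A) (dl A) =
          cmp C (tnsm C (De A) (idn C A))
            (cmp C (asc C (Bo A) (Bo A) A) (cmp C (tnsm C (dl A) (d A)) (d (Bo A)))) \<and>
        cmp C (tnsm C (d A) (idn C A)) (d A) =
          cmp C (asc C (Bo A) A A)
            (cmp C (tnsm C (idn C (Bo A)) (brd C A A))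
              (cmp C (asc_inv C (Bo A) A A) (cmp C (tnsm C (d A) (idn C A)) (d A)))))"

definition differential_category :: "('o,'m) smcat \<Rightarrow> ('o \<Rightarrow> 'o) \<Rightarrow> ('m \<Rightarrow> 'm) \<Rightarrow>
    ('o \<Rightarrow> 'm) \<Rightarrow> ('o \<Rightarrow> 'm) \<Rightarrow> ('o \<Rightarrow> 'm) \<Rightarrow> ('o \<Rightarrow> 'm) \<Rightarrow> ('o \<Rightarrow> 'm) \<Rightarrow> bool" where
  "differential_category C Bo Bm dl ep De ee d \<longleftrightarrow>
     additive_smc C \<and> coalgebra_modality C Bo Bm dl ep De ee \<and>
     deriving_transformation C Bo Bm dl ep De ee d"

definition sc_monad :: "('o,'m) smcat \<Rightarrow> ('o \<Rightarrow> 'o) \<Rightarrow> ('m \<Rightarrow> 'm) \<Rightarrow>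
    ('o \<Rightarrow> 'm) \<Rightarrow> ('o \<Rightarrow> 'm) \<Rightarrow> ('o \<Rightarrow> 'o \<Rightarrow> 'm) \<Rightarrow> 'm \<Rightarrow> bool" where
  "sc_monad C To Tm mu eta n nK \<longleftrightarrow>
     functor_on C To Tm \<and>
     nat_trans C (\<lambda>A. To (To A)) (\<lambda>f. Tm (Tm f)) To Tm mu \<and>
     nat_trans C (\<lambda>A. A) (\<lambda>f. f) To Tm eta \<and>
     (\<forall>A\<in>Obj C.
        cmp C (Tm (mu A)) (mu A) = cmp C (mu (To A)) (mu A) \<and>
        cmp C (eta (To A)) (mu A) = idn C (To A) \<and>
        cmp C (Tm (eta A)) (mu A) = idn C (To A)) \<and>
     (\<forall>A\<in>Obj C. \<forall>B\<in>Obj C. n A B \<in> Hom C (To (tns C A B)) (tns C (To A) (To B))) \<and>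
     nK \<in> Hom C (To (unt C)) (unt C) \<and>
     (\<forall>A A' B B' f g. f \<in> Hom C A A' \<longrightarrow> g \<in> Hom C B B' \<longrightarrow>
        cmp C (Tm (tnsm C f g)) (n A' B') = cmp C (n A B) (tnsm C (Tm f) (Tm g))) \<and>
     (\<forall>A\<in>Obj C. \<forall>B\<in>Obj C. \<forall>D\<in>Obj C.
        cmp C (Tm (asc C A B D)) (cmp C (n A (tns C B D)) (tnsm C (idn C (To A)) (n B D))) =
        cmp C (n (tns C A B) D) (cmp C (tnsm C (n A B) (idn C (To D))) (asc C (To A) (To B) (To D)))) \<and>
     (\<forall>A\<in>Obj C.
        Tm (lun C A) = cmp C (n (unt C) A) (cmp C (tnsm C nK (idn C (To A))) (lun C (To A))) \<and>
        Tm (run C A) = cmp C (n A (unt C)) (cmp C (tnsm C (idn C (To A)) nK) (run C (To A)))) \<and>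
     (\<forall>A\<in>Obj C. \<forall>B\<in>Obj C.
        cmp C (Tm (brd C A B)) (n B A) = cmp C (n A B) (brd C (To A) (To B))) \<and>
     (\<forall>A\<in>Obj C. \<forall>B\<in>Obj C.
        cmp C (mu (tns C A B)) (n A B) =
          cmp C (Tm (n A B)) (cmp C (n (To A) (To B)) (tnsm C (mu A) (mu B))) \<and>
        cmp C (eta (tns C A B)) (n A B) = tnsm C (eta A) (eta B)) \<and>
     cmp C (mu (unt C)) nK = cmp C (Tm nK) nK \<and>
     cmp C (eta (unt C)) nK = idn C (unt C)"

definition em_obj :: "('o,'m) smcat \<Rightarrow> ('o \<Rightarrow> 'o) \<Rightarrow> ('m \<Rightarrow> 'm) \<Rightarrow>
    ('o \<Rightarrow> 'm) \<Rightarrow> ('o \<Rightarrow> 'm) \<Rightarrow> ('o \<times> 'm) set" where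
  "em_obj C To Tm mu eta = {(A, v). A \<in> Obj C \<and> v \<in> Hom C (To A) A \<and>
      cmp C (eta A) v = idn C A \<and> cmp C (mu A) v = cmp C (Tm v) v}"

definition em :: "('o,'m) smcat \<Rightarrow> ('o \<Rightarrow> 'o) \<Rightarrow> ('m \<Rightarrow> 'm) \<Rightarrow>
    ('o \<Rightarrow> 'm) \<Rightarrow> ('o \<Rightarrow> 'm) \<Rightarrow> ('o \<Rightarrow> 'o \<Rightarrow> 'm) \<Rightarrow> 'm \<Rightarrow> ('o \<times> 'm, 'm) smcat" where
  "em C To Tm mu eta n nK = \<lparr>
     Obj = em_obj C To Tm mu eta,
     Hom = (\<lambda>(A, v) (B, w). {f \<in> Hom C A B. (A, v) \<in> em_obj C To Tm mu eta \<and>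
              (B, w) \<in> em_obj C To Tm mu eta \<and> cmp C v f = cmp C (Tm f) w}),
     cmp = cmp C,
     idn = (\<lambda>(A, v). idn C A),
     tns = (\<lambda>(A, v) (B, w). (tns C A B, cmp C (n A B) (tnsm C v w))),
     tnsm = tnsm C,
     unt = (unt C, nK),
     asc = (\<lambda>(A, v) (B, w) (D, u). asc C A B D),
     lun = (\<lambda>(A, v). lun C A),
     run = (\<lambda>(A, v). run C A),
     brd = (\<lambda>(A, v) (B, w). brd C A B),
     zro = (\<lambda>(A, v) (B, w). zro C A B),
     pls = pls C \<rparr>"

definition coalg_mdl :: "('o,'m) smcat \<Rightarrow> ('o \<Rightarrow> 'o) \<Rightarrow> ('m \<Rightarrow> 'm) \<Rightarrow>
    ('o \<Rightarrow> 'm) \<Rightarrow> ('o \<Rightarrow> 'm) \<Rightarrow> ('o \<Rightarrow> 'o \<Rightarrow> 'm) \<Rightarrow> 'm \<Rightarrow>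
    ('o \<Rightarrow> 'o) \<Rightarrow> ('m \<Rightarrow> 'm) \<Rightarrow> ('o \<Rightarrow> 'm) \<Rightarrow> ('o \<Rightarrow> 'm) \<Rightarrow> ('o \<Rightarrow> 'm) \<Rightarrow> ('o \<Rightarrow> 'm) \<Rightarrow>
    ('o \<Rightarrow> 'm) \<Rightarrow> bool" where
  "coalg_mdl C To Tm mu eta n nK Bo Bm dl ep De ee lam \<longleftrightarrow>
     nat_trans C (\<lambda>A. To (Bo A)) (\<lambda>f. Tm (Bm f)) (\<lambda>A. Bo (To A)) (\<lambda>f. Bm (Tm f)) lam \<and>
     (\<forall>A\<in>Obj C.
        cmp C (mu (Bo A)) (lam A) = cmp C (Tm (lam A)) (cmp C (lam (To A)) (Bm (mu A))) \<and>
        cmp C (eta (Bo A)) (lam A) = Bm (eta A) \<and>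
        cmp C (Tm (dl A)) (cmp C (lam (Bo A)) (Bm (lam A))) = cmp C (lam A) (dl (To A)) \<and>
        cmp C (lam A) (ep (To A)) = Tm (ep A) \<and>
        cmp C (Tm (De A)) (cmp C (n (Bo A) (Bo A)) (tnsm C (lam A) (lam A))) =
          cmp C (lam A) (De (To A)) \<and>
        cmp C (Tm (ee A)) nK = cmp C (lam A) (ee (To A)))"

definition differential_mdl_cond :: "('o,'m) smcat \<Rightarrow> ('o \<Rightarrow> 'o) \<Rightarrow> ('m \<Rightarrow> 'm) \<Rightarrow>
    ('o \<Rightarrow> 'o \<Rightarrow> 'm) \<Rightarrow> ('o \<Rightarrow> 'o) \<Rightarrow> ('o \<Rightarrow> 'm) \<Rightarrow> ('o \<Rightarrow> 'm) \<Rightarrow> bool" where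
  "differential_mdl_cond C To Tm n Bo d lam \<longleftrightarrow>
     (\<forall>A\<in>Obj C. cmp C (n (Bo A) A) (cmp C (tnsm C (lam A) (idn C (To A))) (d (To A))) =
                 cmp C (Tm (d A)) (lam A))"

definition differential_mdl :: "('o,'m) smcat \<Rightarrow> ('o \<Rightarrow> 'o) \<Rightarrow> ('m \<Rightarrow> 'm) \<Rightarrow>
    ('o \<Rightarrow> 'm) \<Rightarrow> ('o \<Rightarrow> 'm) \<Rightarrow> ('o \<Rightarrow> 'o \<Rightarrow> 'm) \<Rightarrow> 'm \<Rightarrow>
    ('o \<Rightarrow> 'o) \<Rightarrow> ('m \<Rightarrow> 'm) \<Rightarrow> ('o \<Rightarrow> 'm) \<Rightarrow> ('o \<Rightarrow> 'm) \<Rightarrow> ('o \<Rightarrow> 'm) \<Rightarrow> ('o \<Rightarrow> 'm) \<Rightarrow>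
    ('o \<Rightarrow> 'm) \<Rightarrow> ('o \<Rightarrow> 'm) \<Rightarrow> bool" where
  "differential_mdl C To Tm mu eta n nK Bo Bm dl ep De ee d lam \<longleftrightarrow>
     coalg_mdl C To Tm mu eta n nK Bo Bm dl ep De ee lam \<and>
     differential_mdl_cond C To Tm n Bo d lam"

text \<open>Object part of the lifted functor: (A,\<nu>) \<mapsto> (!A, \<lambda>_A ; !\<nu>); on morphisms
  the lifting acts as !, and \<delta>, \<epsilon>, \<Delta>, e lift componentwise to the same maps.\<close>
definition lift_bang :: "('o,'m) smcat \<Rightarrow> ('o \<Rightarrow> 'o) \<Rightarrow> ('m \<Rightarrow> 'm) \<Rightarrow> ('o \<Rightarrow> 'm) \<Rightarrow>
    'o \<times> 'm \<Rightarrow> 'o \<times> 'm" where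
  "lift_bang C Bo Bm lam = (\<lambda>(A, v). (Bo A, cmp C (lam A) (Bm v)))"

end

theory Submission imports Defs begin

locale DCB =
  fixes X :: "('o, 'm) smcat"
    and Bo :: "'o \<Rightarrow> 'o" and Bm :: "'m \<Rightarrow> 'm"
    and dl ep De ee d :: "'o \<Rightarrow> 'm"
    and To :: "'o \<Rightarrow> 'o" and Tm :: "'m \<Rightarrow> 'm"
    and mu eta :: "'o \<Rightarrow> 'm" and n :: "'o \<Rightarrow> 'o \<Rightarrow> 'm" and nK :: "'m"
  assumes DC: "differential_category X Bo Bm dl ep De ee d"
    and SM: "sc_monad X To Tm mu eta n nK"
    and AF: "additive_functor X To Tm"
begin

abbreviation cm (infixr "\<cdot>" 70) where "f \<cdot> g \<equiv> cmp X f g"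
abbreviation tm (infixr "\<otimes>" 75) where "f \<otimes> g \<equiv> tnsm X f g"
abbreviation H where "H \<equiv> Hom X"
abbreviation Ob where "Ob \<equiv> Obj X"
abbreviation I where "I \<equiv> idn X"
abbreviation K where "K \<equiv> unt X"
abbreviation tn where "tn \<equiv> tns X"

lemma smcX: "smc X" and addX: "additive X" and cmX: "coalgebra_modality X Bo Bm dl ep De ee"
  and dtX: "deriving_transformation X Bo Bm dl ep De ee d"
  using DC unfolding differential_category_def additive_smc_def by blast+
lemma catX: "category X" using smcX unfolding smc_def by (rule conjunct1)

lemmas catE = catX[unfolded category_def]
lemmas smcE = smcX[unfolded smc_def]

lemma hom_obj: "f \<in> H A B \<Longrightarrow> A \<in> Ob \<and> B \<in> Ob"
  using catE[THEN conjunct1] by blast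
lemma idn_hom: "A \<in> Ob \<Longrightarrow> I A \<in> H A A"
  using catE[THEN conjunct2, THEN conjunct1] by blast
lemma comp_hom: "f \<in> H A B \<Longrightarrow> g \<in> H B D \<Longrightarrow> f \<cdot> g \<in> H A D"
  using catE[THEN conjunct2, THEN conjunct2, THEN conjunct1] by blast
lemma idl: "f \<in> H A B \<Longrightarrow> I A \<cdot> f = f"
  using catE[THEN conjunct2, THEN conjunct2, THEN conjunct2, THEN conjunct1] by blast
lemma idr: "f \<in> H A B \<Longrightarrow> f \<cdot> I B = f"
  using catE[THEN conjunct2, THEN conjunct2, THEN conjunct2, THEN conjunct1] by blast
lemma as: "f \<in> H A B \<Longrightarrow> g \<in> H B D \<Longrightarrow> h \<in> H D E \<Longrightarrow> (f \<cdot> g) \<cdot> h = f \<cdot> (g \<cdot> h)"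
  using catE[THEN conjunct2, THEN conjunct2, THEN conjunct2, THEN conjunct2] by blast

lemma unt_obj: "K \<in> Ob" using smcE[THEN conjunct2, THEN conjunct1] by blast
lemma tns_obj: "A \<in> Ob \<Longrightarrow> B \<in> Ob \<Longrightarrow> tn A B \<in> Ob" using smcE[THEN conjunct2, THEN conjunct2, THEN conjunct1] by blast
lemma tnsm_hom: "f \<in> H A B \<Longrightarrow> g \<in> H D E \<Longrightarrow> f \<otimes> g \<in> H (tn A D) (tn B E)"
  using smcE[THEN conjunct2, THEN conjunct2, THEN conjunct2, THEN conjunct1] by blast
lemma tnsm_id: "A \<in> Ob \<Longrightarrow> B \<in> Ob \<Longrightarrow> I A \<otimes> I B = I (tn A B)"
  using smcE[THEN conjunct2, THEN conjunct2, THEN conjunct2, THEN conjunct2, THEN conjunct1] by blast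
lemma tnsm_comp: "f \<in> H A B \<Longrightarrow> g \<in> H B D \<Longrightarrow> f' \<in> H A' B' \<Longrightarrow> g' \<in> H B' D' \<Longrightarrow>
   (f \<cdot> g) \<otimes> (f' \<cdot> g') = (f \<otimes> f') \<cdot> (g \<otimes> g')"
  using smcE[THEN conjunct2, THEN conjunct2, THEN conjunct2, THEN conjunct2, THEN conjunct2, THEN conjunct1] by blast
lemma asc_iso: "A \<in> Ob \<Longrightarrow> B \<in> Ob \<Longrightarrow> D \<in> Ob \<Longrightarrow> iso_in X (tn (tn A B) D) (tn A (tn B D)) (asc X A B D)"
  using smcE[THEN conjunct2, THEN conjunct2, THEN conjunct2, THEN conjunct2, THEN conjunct2, THEN conjunct2, THEN conjunct1] by blast
lemma lun_iso: "A \<in> Ob \<Longrightarrow> iso_in X (tn K A) A (lun X A)"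
  using smcE[THEN conjunct2, THEN conjunct2, THEN conjunct2, THEN conjunct2, THEN conjunct2, THEN conjunct2, THEN conjunct2, THEN conjunct1] by blast
lemma run_iso: "A \<in> Ob \<Longrightarrow> iso_in X (tn A K) A (run X A)"
  using smcE[THEN conjunct2, THEN conjunct2, THEN conjunct2, THEN conjunct2, THEN conjunct2, THEN conjunct2, THEN conjunct2, THEN conjunct2, THEN conjunct1] by blast
lemma brd_hom: "A \<in> Ob \<Longrightarrow> B \<in> Ob \<Longrightarrow> brd X A B \<in> H (tn A B) (tn B A)"
  using smcE[THEN conjunct2, THEN conjunct2, THEN conjunct2, THEN conjunct2, THEN conjunct2, THEN conjunct2, THEN conjunct2, THEN conjunct2, THEN conjunct2, THEN conjunct1] by blast
lemma asc_hom: "A \<in> Ob \<Longrightarrow> B \<in> Ob \<Longrightarrow> D \<in> Ob \<Longrightarrow> asc X A B D \<in> H (tn (tn A B) D) (tn A (tn B D))"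
  using asc_iso[of A B D] unfolding iso_in_def by blast
lemma lun_hom: "A \<in> Ob \<Longrightarrow> lun X A \<in> H (tn K A) A"
  using lun_iso[of A] unfolding iso_in_def by blast
lemma run_hom: "A \<in> Ob \<Longrightarrow> run X A \<in> H (tn A K) A"
  using run_iso[of A] unfolding iso_in_def by blast
lemma asc_nat: "f \<in> H A A' \<Longrightarrow> g \<in> H B B' \<Longrightarrow> h \<in> H D D' \<Longrightarrow>
        asc X A B D \<cdot> (f \<otimes> (g \<otimes> h)) = ((f \<otimes> g) \<otimes> h) \<cdot> asc X A' B' D'"
  using smcE[THEN conjunct2, THEN conjunct2, THEN conjunct2, THEN conjunct2, THEN conjunct2, THEN conjunct2, THEN conjunct2, THEN conjunct2, THEN conjunct2, THEN conjunct2, THEN conjunct1] by blast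
lemma lun_nat: "f \<in> H A B \<Longrightarrow> lun X A \<cdot> f = (I K \<otimes> f) \<cdot> lun X B"
  using smcE[THEN conjunct2, THEN conjunct2, THEN conjunct2, THEN conjunct2, THEN conjunct2, THEN conjunct2, THEN conjunct2, THEN conjunct2, THEN conjunct2, THEN conjunct2, THEN conjunct2, THEN conjunct1] by blast
lemma run_nat: "f \<in> H A B \<Longrightarrow> run X A \<cdot> f = (f \<otimes> I K) \<cdot> run X B"
  using smcE[THEN conjunct2, THEN conjunct2, THEN conjunct2, THEN conjunct2, THEN conjunct2, THEN conjunct2, THEN conjunct2, THEN conjunct2, THEN conjunct2, THEN conjunct2, THEN conjunct2, THEN conjunct2, THEN conjunct1] by blast
lemma brd_nat: "f \<in> H A A' \<Longrightarrow> g \<in> H B B' \<Longrightarrow> brd X A B \<cdot> (g \<otimes> f) = (f \<otimes> g) \<cdot> brd X A' B'"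
  using smcE[THEN conjunct2, THEN conjunct2, THEN conjunct2, THEN conjunct2, THEN conjunct2, THEN conjunct2, THEN conjunct2, THEN conjunct2, THEN conjunct2, THEN conjunct2, THEN conjunct2, THEN conjunct2, THEN conjunct2, THEN conjunct1] by blast

lemma inv_unique: "iso_in X A B f \<Longrightarrow> g \<in> H B A \<Longrightarrow> f \<cdot> g = I A \<Longrightarrow> g \<cdot> f = I B \<Longrightarrow> inv_in X A B f = g"
proof -
  assume iso: "iso_in X A B f" and g: "g \<in> H B A" "f \<cdot> g = I A" "g \<cdot> f = I B"
  have f: "f \<in> H A B" using iso unfolding iso_in_def by blast
  have u: "g' = g" if "g' \<in> H B A" "f \<cdot> g' = I A" "g' \<cdot> f = I B" for g'
  proof -
    have "g' = g' \<cdot> I A" using idr that(1) by metis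
    also have "\<dots> = g' \<cdot> (f \<cdot> g)" using g by simp
    also have "\<dots> = (g' \<cdot> f) \<cdot> g" using as[OF that(1) f g(1)] by simp
    also have "\<dots> = g" using that(3) idl g(1) by metis
    finally show ?thesis .
  qed
  show ?thesis unfolding inv_in_def
    by (rule the_equality) (use g u in blast)+
qed

lemma inv_props: "iso_in X A B f \<Longrightarrow> inv_in X A B f \<in> H B A \<and> f \<cdot> inv_in X A B f = I A \<and> inv_in X A B f \<cdot> f = I B"
proof -
  assume iso: "iso_in X A B f"
  then obtain g where g: "g \<in> H B A" "f \<cdot> g = I A" "g \<cdot> f = I B" unfolding iso_in_def by blast
  have e: "inv_in X A B f = g" by (rule inv_unique[OF iso g])
  show ?thesis unfolding e using g by (intro conjI)
qed

lemma asc_inv_hom: "A \<in> Ob \<Longrightarrow> B \<in> Ob \<Longrightarrow> D \<in> Ob \<Longrightarrow> asc_inv X A B D \<in> H (tn A (tn B D)) (tn (tn A B) D)"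
proof -
  assume "A \<in> Ob" "B \<in> Ob" "D \<in> Ob"
  from inv_props[OF asc_iso[OF this]] show ?thesis unfolding asc_inv_def by (rule conjunct1)
qed

lemmas SME = SM[unfolded sc_monad_def]
lemmas TFE = SME[THEN conjunct1, unfolded functor_on_def]
lemmas muE = SME[THEN conjunct2, THEN conjunct1, unfolded nat_trans_def]
lemmas etaE = SME[THEN conjunct2, THEN conjunct2, THEN conjunct1, unfolded nat_trans_def]
lemma To_obj: "A \<in> Ob \<Longrightarrow> To A \<in> Ob"
  using TFE[THEN conjunct1] by blast
lemma Tm_hom: "f \<in> H A B \<Longrightarrow> Tm f \<in> H (To A) (To B)"
  using TFE[THEN conjunct2, THEN conjunct1] by blast
lemma Tm_id: "A \<in> Ob \<Longrightarrow> Tm (I A) = I (To A)"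
  using TFE[THEN conjunct2, THEN conjunct2, THEN conjunct1] by blast
lemma Tm_comp: "f \<in> H A B \<Longrightarrow> g \<in> H B D \<Longrightarrow> Tm (f \<cdot> g) = Tm f \<cdot> Tm g"
  using TFE[THEN conjunct2, THEN conjunct2, THEN conjunct2] by blast
lemma mu_hom: "A \<in> Ob \<Longrightarrow> mu A \<in> H (To (To A)) (To A)"
  using muE[THEN conjunct1] by blast
lemma mu_nat: "f \<in> H A B \<Longrightarrow> mu A \<cdot> Tm f = Tm (Tm f) \<cdot> mu B"
  using muE[THEN conjunct2] by blast
lemma eta_hom: "A \<in> Ob \<Longrightarrow> eta A \<in> H A (To A)"
  using etaE[THEN conjunct1] by blast
lemma eta_nat: "f \<in> H A B \<Longrightarrow> eta A \<cdot> Tm f = f \<cdot> eta B"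
  using etaE[THEN conjunct2] by blast
lemma mu_assoc: "A \<in> Ob \<Longrightarrow> Tm (mu A) \<cdot> mu A = mu (To A) \<cdot> mu A"
  using SME[THEN conjunct2, THEN conjunct2, THEN conjunct2, THEN conjunct1] by blast
lemma mu_eta1: "A \<in> Ob \<Longrightarrow> eta (To A) \<cdot> mu A = I (To A)"
  using SME[THEN conjunct2, THEN conjunct2, THEN conjunct2, THEN conjunct1] by blast
lemma mu_eta2: "A \<in> Ob \<Longrightarrow> Tm (eta A) \<cdot> mu A = I (To A)"
  using SME[THEN conjunct2, THEN conjunct2, THEN conjunct2, THEN conjunct1] by blast
lemma n_hom: "A \<in> Ob \<Longrightarrow> B \<in> Ob \<Longrightarrow> n A B \<in> H (To (tn A B)) (tn (To A) (To B))"
  using SME[THEN conjunct2, THEN conjunct2, THEN conjunct2, THEN conjunct2, THEN conjunct1] by blast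
lemma nK_hom: "nK \<in> H (To K) K"
  using SME[THEN conjunct2, THEN conjunct2, THEN conjunct2, THEN conjunct2, THEN conjunct2, THEN conjunct1] by blast
lemma n_nat: "f \<in> H A A' \<Longrightarrow> g \<in> H B B' \<Longrightarrow> Tm (f \<otimes> g) \<cdot> n A' B' = n A B \<cdot> (Tm f \<otimes> Tm g)"
  using SME[THEN conjunct2, THEN conjunct2, THEN conjunct2, THEN conjunct2, THEN conjunct2, THEN conjunct2, THEN conjunct1] by blast
lemma n_asc: "A \<in> Ob \<Longrightarrow> B \<in> Ob \<Longrightarrow> D \<in> Ob \<Longrightarrow> Tm (asc X A B D) \<cdot> (n A (tn B D) \<cdot> (I (To A) \<otimes> n B D)) = n (tn A B) D \<cdot> ((n A B \<otimes> I (To D)) \<cdot> asc X (To A) (To B) (To D))"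
  using SME[THEN conjunct2, THEN conjunct2, THEN conjunct2, THEN conjunct2, THEN conjunct2, THEN conjunct2, THEN conjunct2, THEN conjunct1] by blast
lemma n_lun: "A \<in> Ob \<Longrightarrow> Tm (lun X A) = n K A \<cdot> ((nK \<otimes> I (To A)) \<cdot> lun X (To A))"
  using SME[THEN conjunct2, THEN conjunct2, THEN conjunct2, THEN conjunct2, THEN conjunct2, THEN conjunct2, THEN conjunct2, THEN conjunct2, THEN conjunct1] by blast
lemma n_run: "A \<in> Ob \<Longrightarrow> Tm (run X A) = n A K \<cdot> ((I (To A) \<otimes> nK) \<cdot> run X (To A))"
  using SME[THEN conjunct2, THEN conjunct2, THEN conjunct2, THEN conjunct2, THEN conjunct2, THEN conjunct2, THEN conjunct2, THEN conjunct2, THEN conjunct1] by blast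
lemma n_brd: "A \<in> Ob \<Longrightarrow> B \<in> Ob \<Longrightarrow> Tm (brd X A B) \<cdot> n B A = n A B \<cdot> brd X (To A) (To B)"
  using SME[THEN conjunct2, THEN conjunct2, THEN conjunct2, THEN conjunct2, THEN conjunct2, THEN conjunct2, THEN conjunct2, THEN conjunct2, THEN conjunct2, THEN conjunct1] by blast
lemma n_mu: "A \<in> Ob \<Longrightarrow> B \<in> Ob \<Longrightarrow> mu (tn A B) \<cdot> n A B = Tm (n A B) \<cdot> (n (To A) (To B) \<cdot> (mu A \<otimes> mu B))"
  using SME[THEN conjunct2, THEN conjunct2, THEN conjunct2, THEN conjunct2, THEN conjunct2, THEN conjunct2, THEN conjunct2, THEN conjunct2, THEN conjunct2, THEN conjunct2, THEN conjunct1] by blast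
lemma n_eta: "A \<in> Ob \<Longrightarrow> B \<in> Ob \<Longrightarrow> eta (tn A B) \<cdot> n A B = eta A \<otimes> eta B"
  using SME[THEN conjunct2, THEN conjunct2, THEN conjunct2, THEN conjunct2, THEN conjunct2, THEN conjunct2, THEN conjunct2, THEN conjunct2, THEN conjunct2, THEN conjunct2, THEN conjunct1] by blast
lemma nK_mu: "mu K \<cdot> nK = Tm nK \<cdot> nK"
  using SME[THEN conjunct2, THEN conjunct2, THEN conjunct2, THEN conjunct2, THEN conjunct2, THEN conjunct2, THEN conjunct2, THEN conjunct2, THEN conjunct2, THEN conjunct2, THEN conjunct2, THEN conjunct1] by blast
lemma nK_eta: "eta K \<cdot> nK = I K"
  using SME[THEN conjunct2, THEN conjunct2, THEN conjunct2, THEN conjunct2, THEN conjunct2, THEN conjunct2, THEN conjunct2, THEN conjunct2, THEN conjunct2, THEN conjunct2, THEN conjunct2, THEN conjunct2] by blast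
lemmas AFE = AF[unfolded additive_functor_def]
lemma Tm_pls: "f \<in> H A B \<Longrightarrow> g \<in> H A B \<Longrightarrow> Tm (pls X f g) = pls X (Tm f) (Tm g)"
  using AFE[THEN conjunct2, THEN conjunct1] by blast
lemma Tm_zro: "A \<in> Ob \<Longrightarrow> B \<in> Ob \<Longrightarrow> Tm (zro X A B) = zro X (To A) (To B)"
  using AFE[THEN conjunct2, THEN conjunct2] by blast
lemmas addE = addX[unfolded additive_def]
lemma zro_hom: "A \<in> Ob \<Longrightarrow> B \<in> Ob \<Longrightarrow> zro X A B \<in> H A B"
  using addE[THEN conjunct1] by blast
lemma pls_hom: "f \<in> H A B \<Longrightarrow> g \<in> H A B \<Longrightarrow> pls X f g \<in> H A B"
  using addE[THEN conjunct2, THEN conjunct1] by blast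
lemma cmp_pls: "f \<in> H A B \<Longrightarrow> g \<in> H B D \<Longrightarrow> g' \<in> H B D \<Longrightarrow> f \<cdot> pls X g g' = pls X (f \<cdot> g) (f \<cdot> g')"
  using addE[THEN conjunct2, THEN conjunct2, THEN conjunct2, THEN conjunct2, THEN conjunct2, THEN conjunct1] by blast
lemma cmp_zro: "f \<in> H A B \<Longrightarrow> D \<in> Ob \<Longrightarrow> f \<cdot> zro X B D = zro X A D"
  using addE[THEN conjunct2, THEN conjunct2, THEN conjunct2, THEN conjunct2, THEN conjunct2, THEN conjunct2, THEN conjunct1] by blast
lemma pls_cmp: "g \<in> H A B \<Longrightarrow> g' \<in> H A B \<Longrightarrow> h \<in> H B D \<Longrightarrow> pls X g g' \<cdot> h = pls X (g \<cdot> h) (g' \<cdot> h)"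
  using addE[THEN conjunct2, THEN conjunct2, THEN conjunct2, THEN conjunct2, THEN conjunct2, THEN conjunct2, THEN conjunct2, THEN conjunct1] by blast
lemma zro_cmp: "h \<in> H B D \<Longrightarrow> A \<in> Ob \<Longrightarrow> zro X A B \<cdot> h = zro X A D"
  using addE[THEN conjunct2, THEN conjunct2, THEN conjunct2, THEN conjunct2, THEN conjunct2, THEN conjunct2, THEN conjunct2, THEN conjunct2, THEN conjunct1] by blast
lemmas cmE = cmX[unfolded coalgebra_modality_def]
lemmas BFE = cmE[THEN conjunct1, unfolded functor_on_def]
lemma Bo_obj: "A \<in> Ob \<Longrightarrow> Bo A \<in> Ob"
  using BFE[THEN conjunct1] by blast
lemma Bm_hom: "f \<in> H A B \<Longrightarrow> Bm f \<in> H (Bo A) (Bo B)"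
  using BFE[THEN conjunct2, THEN conjunct1] by blast
lemma Bm_id: "A \<in> Ob \<Longrightarrow> Bm (I A) = I (Bo A)"
  using BFE[THEN conjunct2, THEN conjunct2, THEN conjunct1] by blast
lemma Bm_comp: "f \<in> H A B \<Longrightarrow> g \<in> H B D \<Longrightarrow> Bm (f \<cdot> g) = Bm f \<cdot> Bm g"
  using BFE[THEN conjunct2, THEN conjunct2, THEN conjunct2] by blast
lemmas dlE = cmE[THEN conjunct2, THEN conjunct1, unfolded nat_trans_def]
lemmas epE = cmE[THEN conjunct2, THEN conjunct2, THEN conjunct1, unfolded nat_trans_def]
lemmas DeE = cmE[THEN conjunct2, THEN conjunct2, THEN conjunct2, THEN conjunct1, unfolded nat_trans_def]
lemmas eeE = cmE[THEN conjunct2, THEN conjunct2, THEN conjunct2, THEN conjunct2, THEN conjunct1, unfolded nat_trans_def]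
lemmas cmlaws = cmE[THEN conjunct2, THEN conjunct2, THEN conjunct2, THEN conjunct2, THEN conjunct2]
lemma dl_hom: "A \<in> Ob \<Longrightarrow> dl A \<in> H (Bo A) (Bo (Bo A))"
  using dlE[THEN conjunct1] by blast
lemma dl_nat: "f \<in> H A B \<Longrightarrow> dl A \<cdot> Bm (Bm f) = Bm f \<cdot> dl B"
  using dlE[THEN conjunct2] by blast
lemma ep_hom: "A \<in> Ob \<Longrightarrow> ep A \<in> H (Bo A) A"
  using epE[THEN conjunct1] by blast
lemma ep_nat: "f \<in> H A B \<Longrightarrow> ep A \<cdot> f = Bm f \<cdot> ep B"
  using epE[THEN conjunct2] by blast
lemma De_hom: "A \<in> Ob \<Longrightarrow> De A \<in> H (Bo A) (tn (Bo A) (Bo A))"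
  using DeE[THEN conjunct1] by blast
lemma De_nat: "f \<in> H A B \<Longrightarrow> De A \<cdot> (Bm f \<otimes> Bm f) = Bm f \<cdot> De B"
  using DeE[THEN conjunct2] by blast
lemma ee_hom: "A \<in> Ob \<Longrightarrow> ee A \<in> H (Bo A) K"
  using eeE[THEN conjunct1] by blast
lemma ee_nat: "f \<in> H A B \<Longrightarrow> ee A \<cdot> I K = Bm f \<cdot> ee B"
  using eeE[THEN conjunct2] by blast
lemmas dtE = dtX[unfolded deriving_transformation_def]
lemmas dE = dtE[THEN conjunct1, unfolded nat_trans_def]
lemma d_hom: "A \<in> Ob \<Longrightarrow> d A \<in> H (tn (Bo A) A) (Bo A)"
  using dE[THEN conjunct1] by blast
lemma d_nat: "f \<in> H A B \<Longrightarrow> d A \<cdot> Bm f = (Bm f \<otimes> f) \<cdot> d B"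
  using dE[THEN conjunct2] by blast
lemmas dlaws = dtE[THEN conjunct2]


lemmas ty = comp_hom idn_hom tnsm_hom Tm_hom Bm_hom mu_hom eta_hom n_hom nK_hom dl_hom ep_hom De_hom ee_hom d_hom
  asc_hom lun_hom run_hom brd_hom asc_inv_hom zro_hom pls_hom To_obj Bo_obj tns_obj unt_obj

abbreviation EO where "EO \<equiv> em_obj X To Tm mu eta"

lemma EO_iff: "(A,v) \<in> EO \<longleftrightarrow> A \<in> Ob \<and> v \<in> H (To A) A \<and> eta A \<cdot> v = I A \<and> mu A \<cdot> v = Tm v \<cdot> v"
  by (simp add: em_obj_def)

lemma tns_EO: assumes "(A,v) \<in> EO" "(B,w) \<in> EO" shows "(tn A B, n A B \<cdot> (v \<otimes> w)) \<in> EO"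
proof -
  from assms have A: "A \<in> Ob" and v: "v \<in> H (To A) A" and ve: "eta A \<cdot> v = I A" and vm: "mu A \<cdot> v = Tm v \<cdot> v"
    and B: "B \<in> Ob" and w: "w \<in> H (To B) B" and we: "eta B \<cdot> w = I B" and wm: "mu B \<cdot> w = Tm w \<cdot> w"
    unfolding EO_iff by auto
  note tyl = A B v w
  have "eta (tn A B) \<cdot> (n A B \<cdot> (v \<otimes> w)) = (eta (tn A B) \<cdot> n A B) \<cdot> (v \<otimes> w)"
    by (((subst as, (rule ty tyl)+)+)?, rule refl)
  also have "\<dots> = (eta A \<otimes> eta B) \<cdot> (v \<otimes> w)" by (simp only: n_eta A B)
  also have "\<dots> = (eta A \<cdot> v) \<otimes> (eta B \<cdot> w)" by (rule tnsm_comp[symmetric], (rule ty tyl)+)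
  also have "\<dots> = I (tn A B)" by (simp only: ve we tnsm_id A B)
  finally have e1: "eta (tn A B) \<cdot> (n A B \<cdot> (v \<otimes> w)) = I (tn A B)" .
  have "mu (tn A B) \<cdot> (n A B \<cdot> (v \<otimes> w)) = (mu (tn A B) \<cdot> n A B) \<cdot> (v \<otimes> w)"
    by (((subst as, (rule ty tyl)+)+)?, rule refl)
  also have "\<dots> = (Tm (n A B) \<cdot> (n (To A) (To B) \<cdot> (mu A \<otimes> mu B))) \<cdot> (v \<otimes> w)" by (simp only: n_mu A B)
  also have "\<dots> = Tm (n A B) \<cdot> (n (To A) (To B) \<cdot> ((mu A \<otimes> mu B) \<cdot> (v \<otimes> w)))"
    by (((subst as, (rule ty tyl)+)+)?, rule refl)
  also have "\<dots> = Tm (n A B) \<cdot> (n (To A) (To B) \<cdot> ((Tm v \<cdot> v) \<otimes> (Tm w \<cdot> w)))"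
    by (simp only: tnsm_comp[OF mu_hom[OF A] v mu_hom[OF B] w, symmetric] vm wm)
  also have "\<dots> = Tm (n A B) \<cdot> ((n (To A) (To B) \<cdot> (Tm v \<otimes> Tm w)) \<cdot> (v \<otimes> w))"
    by (simp only: tnsm_comp[OF Tm_hom[OF v] v Tm_hom[OF w] w], ((subst as, (rule ty tyl)+)+)?, rule refl)
  also have "\<dots> = Tm (n A B) \<cdot> ((Tm (v \<otimes> w) \<cdot> n A B) \<cdot> (v \<otimes> w))"
    by (simp only: n_nat[OF v w])
  also have "\<dots> = Tm (n A B \<cdot> (v \<otimes> w)) \<cdot> (n A B \<cdot> (v \<otimes> w))"
    by (simp only: Tm_comp[OF n_hom[OF A B] tnsm_hom[OF v w]], ((subst as, (rule ty tyl)+)+)?, rule refl)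
  finally have e2: "mu (tn A B) \<cdot> (n A B \<cdot> (v \<otimes> w)) = Tm (n A B \<cdot> (v \<otimes> w)) \<cdot> (n A B \<cdot> (v \<otimes> w))" .
  have "n A B \<cdot> (v \<otimes> w) \<in> H (To (tn A B)) (tn A B)" by (rule ty tyl)+
  then show ?thesis unfolding EO_iff using e1 e2 A B tns_obj by blast
qed


lemma pent: "A \<in> Ob \<Longrightarrow> B \<in> Ob \<Longrightarrow> D \<in> Ob \<Longrightarrow> E \<in> Ob \<Longrightarrow>
        asc X (tn A B) D E \<cdot> asc X A B (tn D E) =
        (asc X A B D \<otimes> I E) \<cdot> (asc X A (tn B D) E \<cdot> (I A \<otimes> asc X B D E))"
  using smcE[THEN conjunct2, THEN conjunct2, THEN conjunct2, THEN conjunct2, THEN conjunct2, THEN conjunct2, THEN conjunct2, THEN conjunct2, THEN conjunct2, THEN conjunct2, THEN conjunct2, THEN conjunct2, THEN conjunct2, THEN conjunct2, THEN conjunct1] by blast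
lemma tri: "A \<in> Ob \<Longrightarrow> B \<in> Ob \<Longrightarrow> asc X A K B \<cdot> (I A \<otimes> lun X B) = run X A \<otimes> I B"
  using smcE[THEN conjunct2, THEN conjunct2, THEN conjunct2, THEN conjunct2, THEN conjunct2, THEN conjunct2, THEN conjunct2, THEN conjunct2, THEN conjunct2, THEN conjunct2, THEN conjunct2, THEN conjunct2, THEN conjunct2, THEN conjunct2, THEN conjunct2, THEN conjunct1] by blast
lemma hex: "A \<in> Ob \<Longrightarrow> B \<in> Ob \<Longrightarrow> D \<in> Ob \<Longrightarrow>
        asc X A B D \<cdot> (brd X A (tn B D) \<cdot> asc X B D A) =
        (brd X A B \<otimes> I D) \<cdot> (asc X B A D \<cdot> (I B \<otimes> brd X A D))"
  using smcE[THEN conjunct2, THEN conjunct2, THEN conjunct2, THEN conjunct2, THEN conjunct2, THEN conjunct2, THEN conjunct2, THEN conjunct2, THEN conjunct2, THEN conjunct2, THEN conjunct2, THEN conjunct2, THEN conjunct2, THEN conjunct2, THEN conjunct2, THEN conjunct2, THEN conjunct1] by blast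
lemma symm: "A \<in> Ob \<Longrightarrow> B \<in> Ob \<Longrightarrow> brd X A B \<cdot> brd X B A = I (tn A B)"
  using smcE[THEN conjunct2, THEN conjunct2, THEN conjunct2, THEN conjunct2, THEN conjunct2, THEN conjunct2, THEN conjunct2, THEN conjunct2, THEN conjunct2, THEN conjunct2, THEN conjunct2, THEN conjunct2, THEN conjunct2, THEN conjunct2, THEN conjunct2, THEN conjunct2, THEN conjunct2] by blast

abbreviation XT where "XT \<equiv> em X To Tm mu eta n nK"

lemma XT_Obj: "Obj XT = EO" by (simp add: em_def)
lemma XT_Hom: "f \<in> Hom XT P Q \<longleftrightarrow> f \<in> H (fst P) (fst Q) \<and> P \<in> EO \<and> Q \<in> EO \<and> snd P \<cdot> f = Tm f \<cdot> snd Q"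
  by (cases P, cases Q) (simp add: em_def)
lemma XT_cmp: "cmp XT = cmp X" by (simp add: em_def)
lemma XT_tnsm: "tnsm XT = tnsm X" by (simp add: em_def)
lemma XT_pls: "pls XT = pls X" by (simp add: em_def)
lemma XT_idn: "idn XT P = I (fst P)" by (cases P) (simp add: em_def)
lemma XT_tns: "tns XT P Q = (tn (fst P) (fst Q), n (fst P) (fst Q) \<cdot> (snd P \<otimes> snd Q))"
  by (cases P, cases Q) (simp add: em_def)
lemma XT_unt: "unt XT = (K, nK)" by (simp add: em_def)
lemma XT_asc: "asc XT P Q R = asc X (fst P) (fst Q) (fst R)" by (cases P, cases Q, cases R) (simp add: em_def)
lemma XT_lun: "lun XT P = lun X (fst P)" by (cases P) (simp add: em_def)
lemma XT_run: "run XT P = run X (fst P)" by (cases P) (simp add: em_def)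
lemma XT_brd: "brd XT P Q = brd X (fst P) (fst Q)" by (cases P, cases Q) (simp add: em_def)
lemma XT_zro: "zro XT P Q = zro X (fst P) (fst Q)" by (cases P, cases Q) (simp add: em_def)
lemmas XT_simps = XT_Obj XT_cmp XT_tnsm XT_pls XT_idn XT_tns XT_unt XT_asc XT_lun XT_run XT_brd XT_zro

lemma EO_D: "P \<in> EO \<Longrightarrow> fst P \<in> Ob \<and> snd P \<in> H (To (fst P)) (fst P) \<and> eta (fst P) \<cdot> snd P = I (fst P) \<and>
   mu (fst P) \<cdot> snd P = Tm (snd P) \<cdot> snd P"
  by (cases P) (simp add: em_obj_def)

lemma XT_hom_obj: "Hom XT P Q \<noteq> {} \<Longrightarrow> P \<in> Obj XT \<and> Q \<in> Obj XT"
  by (auto simp: XT_Hom XT_Obj)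

lemma XT_idn_hom: assumes "P \<in> Obj XT" shows "idn XT P \<in> Hom XT P P"
proof -
  obtain A u where P: "P = (A,u)" by (cases P)
  have A: "A \<in> Ob" and u: "u \<in> H (To A) A" using assms EO_D[of P] by (auto simp: P XT_Obj)
  have "u \<cdot> I A = Tm (I A) \<cdot> u" using idr[OF u] idl[OF u] Tm_id[OF A] by simp
  then show ?thesis using assms A by (simp add: XT_Hom XT_idn XT_Obj P idn_hom)
qed

lemma XT_comp_hom: assumes "f \<in> Hom XT P Q" "g \<in> Hom XT Q R" shows "cmp XT f g \<in> Hom XT P R"
proof -
  obtain A u where P: "P = (A,u)" by (cases P)
  obtain B v where Q: "Q = (B,v)" by (cases Q)
  obtain D w where R: "R = (D,w)" by (cases R)
  have f: "f \<in> H A B" and g: "g \<in> H B D" and hf: "u \<cdot> f = Tm f \<cdot> v" and hg: "v \<cdot> g = Tm g \<cdot> w"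
    and PE: "P \<in> EO" and RE: "R \<in> EO" using assms by (auto simp: XT_Hom P Q R)
  have u: "u \<in> H (To A) A" and v: "v \<in> H (To B) B" and w: "w \<in> H (To D) D"
    using EO_D[OF PE] EO_D[OF RE] f g hom_obj assms by (auto simp: P Q R XT_Hom dest: EO_D)
  note tyl = f g u v w
  have "u \<cdot> (f \<cdot> g) = (u \<cdot> f) \<cdot> g" by (((subst as, (rule ty tyl)+)+)?, (rule refl)?)
  also have "\<dots> = (Tm f \<cdot> v) \<cdot> g" by (simp only: hf)
  also have "\<dots> = Tm f \<cdot> (Tm g \<cdot> w)" by (simp only: as[OF Tm_hom[OF f] v g] hg)
  also have "\<dots> = Tm (f \<cdot> g) \<cdot> w" by (simp only: Tm_comp[OF f g], ((subst as, (rule ty tyl)+)+)?, (rule refl)?)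
  finally show ?thesis using f g PE RE by (simp add: XT_Hom XT_cmp P R comp_hom)
qed

lemma XT_sub: "f \<in> Hom XT P Q \<Longrightarrow> f \<in> H (fst P) (fst Q)" by (simp add: XT_Hom)

lemma cat_XT: "category XT"
  unfolding category_def
proof (intro conjI allI impI ballI)
  show "\<And>A B. Hom XT A B \<noteq> {} \<Longrightarrow> A \<in> Obj XT" using XT_hom_obj by blast
  show "\<And>A B. Hom XT A B \<noteq> {} \<Longrightarrow> B \<in> Obj XT" using XT_hom_obj by blast
  show "\<And>A. A \<in> Obj XT \<Longrightarrow> idn XT A \<in> Hom XT A A" by (rule XT_idn_hom)
  show "\<And>A B D f g. f \<in> Hom XT A B \<Longrightarrow> g \<in> Hom XT B D \<Longrightarrow> cmp XT f g \<in> Hom XT A D" by (rule XT_comp_hom)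
  show "\<And>A B f. f \<in> Hom XT A B \<Longrightarrow> cmp XT (idn XT A) f = f" by (simp add: XT_cmp XT_idn) (metis idl XT_sub)
  show "\<And>A B f. f \<in> Hom XT A B \<Longrightarrow> cmp XT f (idn XT B) = f" by (simp add: XT_cmp XT_idn) (metis idr XT_sub)
  show "\<And>A B D E f g h. f \<in> Hom XT A B \<Longrightarrow> g \<in> Hom XT B D \<Longrightarrow> h \<in> Hom XT D E \<Longrightarrow>
        cmp XT (cmp XT f g) h = cmp XT f (cmp XT g h)" by (simp add: XT_cmp) (metis as XT_sub)
qed


lemma EO_pair: "(A,u) \<in> EO \<Longrightarrow> A \<in> Ob \<and> u \<in> H (To A) A" by (simp add: EO_iff)

lemma XT_unt_obj: "unt XT \<in> Obj XT"
  using unt_obj nK_hom nK_eta nK_mu by (simp add: XT_unt XT_Obj EO_iff)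

lemma XT_tns_obj: "P \<in> Obj XT \<Longrightarrow> Q \<in> Obj XT \<Longrightarrow> tns XT P Q \<in> Obj XT"
  using tns_EO[of "fst P" "snd P" "fst Q" "snd Q"] by (simp add: XT_tns XT_Obj)

lemma XT_iso:
  assumes iso: "iso_in X (fst P) (fst Q) f" and fh: "f \<in> Hom XT P Q"
  shows "inv_in X (fst P) (fst Q) f \<in> Hom XT Q P" and "iso_in XT P Q f"
    and "inv_in XT P Q f = inv_in X (fst P) (fst Q) f"
proof -
  obtain A u where P: "P = (A,u)" by (cases P)
  obtain B v where Q: "Q = (B,v)" by (cases Q)
  define g where "g = inv_in X A B f"
  have g: "g \<in> H B A" and fg: "f \<cdot> g = I A" and gf: "g \<cdot> f = I B"
    using inv_props[of A B f] iso by (simp_all add: P Q g_def)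
  have f: "f \<in> H A B" and hf: "u \<cdot> f = Tm f \<cdot> v" and PE: "(A,u) \<in> EO" and QE: "(B,v) \<in> EO"
    using fh by (simp_all add: XT_Hom P Q)
  have A: "A \<in> Ob" and u: "u \<in> H (To A) A" using EO_pair[OF PE] by auto
  have B: "B \<in> Ob" and v: "v \<in> H (To B) B" using EO_pair[OF QE] by auto
  note tyl = A B u v f g
  have "Tm g \<cdot> u = Tm g \<cdot> (u \<cdot> (f \<cdot> g))" by (simp only: fg idr[OF u])
  also have "\<dots> = Tm g \<cdot> ((Tm f \<cdot> v) \<cdot> g)" by (simp only: as[OF u f g, symmetric] hf)
  also have "\<dots> = Tm (g \<cdot> f) \<cdot> (v \<cdot> g)" by (simp only: Tm_comp[OF g f], ((subst as, (rule ty tyl)+)+)?, (rule refl)?)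
  also have "\<dots> = v \<cdot> g" by (simp only: gf Tm_id[OF B] idl[OF comp_hom[OF v g]])
  finally have hg: "v \<cdot> g = Tm g \<cdot> u" by simp
  show gh: "inv_in X (fst P) (fst Q) f \<in> Hom XT Q P"
    using g hg PE QE by (simp add: XT_Hom P Q g_def)
  show "iso_in XT P Q f" unfolding iso_in_def
    using fh gh fg gf by (auto simp: XT_cmp XT_idn P Q g_def)
  show "inv_in XT P Q f = inv_in X (fst P) (fst Q) f"
    unfolding inv_in_def[of XT]
  proof (rule the_equality)
    show "inv_in X (fst P) (fst Q) f \<in> Hom XT Q P \<and> cmp XT f (inv_in X (fst P) (fst Q) f) = idn XT P \<and>
      cmp XT (inv_in X (fst P) (fst Q) f) f = idn XT Q"
      using gh fg gf by (simp add: XT_cmp XT_idn P Q g_def)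
    fix g' assume "g' \<in> Hom XT Q P \<and> cmp XT f g' = idn XT P \<and> cmp XT g' f = idn XT Q"
    then have "g' \<in> H B A" "f \<cdot> g' = I A" "g' \<cdot> f = I B" by (simp_all add: XT_cmp XT_idn XT_Hom P Q)
    from inv_unique[OF _ this] iso show "g' = inv_in X (fst P) (fst Q) f" by (simp add: P Q)
  qed
qed

lemma XT_tnsm_hom: assumes fh: "f \<in> Hom XT P P'" and gh: "g \<in> Hom XT Q Q'"
  shows "tnsm XT f g \<in> Hom XT (tns XT P Q) (tns XT P' Q')"
proof -
  obtain A u where P: "P = (A,u)" by (cases P)
  obtain B v where Q: "Q = (B,v)" by (cases Q)
  obtain A' u' where P': "P' = (A',u')" by (cases P')
  obtain B' v' where Q': "Q' = (B',v')" by (cases Q')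
  have f: "f \<in> H A A'" and hf: "u \<cdot> f = Tm f \<cdot> u'" and PE: "(A,u) \<in> EO" and PE': "(A',u') \<in> EO"
    using fh by (simp_all add: XT_Hom P P')
  have g: "g \<in> H B B'" and hg: "v \<cdot> g = Tm g \<cdot> v'" and QE: "(B,v) \<in> EO" and QE': "(B',v') \<in> EO"
    using gh by (simp_all add: XT_Hom Q Q')
  have A: "A \<in> Ob" and u: "u \<in> H (To A) A" using EO_pair[OF PE] by auto
  have B: "B \<in> Ob" and v: "v \<in> H (To B) B" using EO_pair[OF QE] by auto
  have A': "A' \<in> Ob" and u': "u' \<in> H (To A') A'" using EO_pair[OF PE'] by auto
  have B': "B' \<in> Ob" and v': "v' \<in> H (To B') B'" using EO_pair[OF QE'] by auto
  note tyl = A B u v f g A' B' u' v'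
  have "(n A B \<cdot> (u \<otimes> v)) \<cdot> (f \<otimes> g) = n A B \<cdot> ((u \<cdot> f) \<otimes> (v \<cdot> g))"
    by (simp only: tnsm_comp[OF u f v g], ((subst as, (rule ty tyl)+)+)?, (rule refl)?)
  also have "\<dots> = n A B \<cdot> ((Tm f \<cdot> u') \<otimes> (Tm g \<cdot> v'))" by (simp only: hf hg)
  also have "\<dots> = n A B \<cdot> ((Tm f \<otimes> Tm g) \<cdot> (u' \<otimes> v'))"
    by (simp only: tnsm_comp[OF Tm_hom[OF f] u' Tm_hom[OF g] v'])
  also have "\<dots> = Tm (f \<otimes> g) \<cdot> (n A' B' \<cdot> (u' \<otimes> v'))"
    by (simp only: as[OF Tm_hom[OF tnsm_hom[OF f g]] n_hom[OF A' B'] tnsm_hom[OF u' v'], symmetric] n_nat[OF f g], ((subst as, (rule ty tyl)+)+)?, (rule refl)?)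
  finally have e: "(n A B \<cdot> (u \<otimes> v)) \<cdot> (f \<otimes> g) = Tm (f \<otimes> g) \<cdot> (n A' B' \<cdot> (u' \<otimes> v'))" .
  show ?thesis using e tns_EO[OF PE QE] tns_EO[OF PE' QE'] tnsm_hom[OF f g]
    by (simp add: XT_Hom XT_tns XT_tnsm P Q P' Q')
qed

lemma XT_asc_hom: assumes PE: "(A,u) \<in> EO" and QE: "(B,v) \<in> EO" and RE: "(D,w) \<in> EO"
  shows "asc X A B D \<in> Hom XT (tns XT (tns XT (A,u) (B,v)) (D,w)) (tns XT (A,u) (tns XT (B,v) (D,w)))"
proof -
  have A: "A \<in> Ob" and u: "u \<in> H (To A) A" using EO_pair[OF PE] by auto
  have B: "B \<in> Ob" and v: "v \<in> H (To B) B" using EO_pair[OF QE] by auto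
  have D: "D \<in> Ob" and w: "w \<in> H (To D) D" using EO_pair[OF RE] by auto
  note tyl = A B D u v w
  have "(n (tn A B) D \<cdot> ((n A B \<cdot> (u \<otimes> v)) \<otimes> w)) \<cdot> asc X A B D
      = n (tn A B) D \<cdot> (((n A B \<cdot> (u \<otimes> v)) \<otimes> (I (To D) \<cdot> w)) \<cdot> asc X A B D)"
    by (simp only: idl[OF w], ((subst as, (rule ty tyl)+)+)?, (rule refl)?)
  also have "\<dots> = n (tn A B) D \<cdot> (((n A B \<otimes> I (To D)) \<cdot> ((u \<otimes> v) \<otimes> w)) \<cdot> asc X A B D)"
    by (simp only: tnsm_comp[OF n_hom[OF A B] tnsm_hom[OF u v] idn_hom[OF To_obj[OF D]] w])
  also have "\<dots> = n (tn A B) D \<cdot> ((n A B \<otimes> I (To D)) \<cdot> (asc X (To A) (To B) (To D) \<cdot> (u \<otimes> (v \<otimes> w))))"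
    by (simp only: asc_nat[OF u v w], ((subst as, (rule ty tyl)+)+)?, (rule refl)?)
  also have "\<dots> = (Tm (asc X A B D) \<cdot> (n A (tn B D) \<cdot> (I (To A) \<otimes> n B D))) \<cdot> (u \<otimes> (v \<otimes> w))"
    by (simp only: n_asc[OF A B D], ((subst as, (rule ty tyl)+)+)?, (rule refl)?)
  also have "\<dots> = Tm (asc X A B D) \<cdot> (n A (tn B D) \<cdot> (u \<otimes> (n B D \<cdot> (v \<otimes> w))))"
    by (((subst as, (rule ty tyl)+)+)?, (rule refl)?, simp only: tnsm_comp[OF idn_hom[OF To_obj[OF A]] u n_hom[OF B D] tnsm_hom[OF v w], symmetric] idl[OF u])
  finally have e: "(n (tn A B) D \<cdot> ((n A B \<cdot> (u \<otimes> v)) \<otimes> w)) \<cdot> asc X A B D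
      = Tm (asc X A B D) \<cdot> (n A (tn B D) \<cdot> (u \<otimes> (n B D \<cdot> (v \<otimes> w))))" .
  show ?thesis using e asc_hom[OF A B D] tns_EO[OF tns_EO[OF PE QE] RE] tns_EO[OF PE tns_EO[OF QE RE]]
    by (simp add: XT_Hom XT_tns)
qed

lemma XT_lun_hom: assumes PE: "(A,u) \<in> EO"
  shows "lun X A \<in> Hom XT (tns XT (unt XT) (A,u)) (A,u)"
proof -
  have A: "A \<in> Ob" and u: "u \<in> H (To A) A" using EO_pair[OF PE] by auto
  note tyl = A u
  have "(n K A \<cdot> (nK \<otimes> u)) \<cdot> lun X A = n K A \<cdot> (((nK \<cdot> I K) \<otimes> (I (To A) \<cdot> u)) \<cdot> lun X A)"
    by (simp only: idr[OF nK_hom] idl[OF u], ((subst as, (rule ty tyl)+)+)?, (rule refl)?)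
  also have "\<dots> = n K A \<cdot> (((nK \<otimes> I (To A)) \<cdot> (I K \<otimes> u)) \<cdot> lun X A)"
    by (simp only: tnsm_comp[OF nK_hom idn_hom[OF unt_obj] idn_hom[OF To_obj[OF A]] u])
  also have "\<dots> = n K A \<cdot> ((nK \<otimes> I (To A)) \<cdot> (lun X (To A) \<cdot> u))"
    by (simp only: lun_nat[OF u], ((subst as, (rule ty tyl)+)+)?, (rule refl)?)
  also have "\<dots> = Tm (lun X A) \<cdot> u" by (simp only: n_lun[OF A], ((subst as, (rule ty tyl)+)+)?, (rule refl)?)
  finally have e: "(n K A \<cdot> (nK \<otimes> u)) \<cdot> lun X A = Tm (lun X A) \<cdot> u" .
  have UE: "(K, nK) \<in> EO" using XT_unt_obj by (simp add: XT_unt XT_Obj)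
  show ?thesis using e lun_hom[OF A] tns_EO[OF UE PE] PE by (simp add: XT_Hom XT_tns XT_unt)
qed

lemma XT_run_hom: assumes PE: "(A,u) \<in> EO"
  shows "run X A \<in> Hom XT (tns XT (A,u) (unt XT)) (A,u)"
proof -
  have A: "A \<in> Ob" and u: "u \<in> H (To A) A" using EO_pair[OF PE] by auto
  note tyl = A u
  have "(n A K \<cdot> (u \<otimes> nK)) \<cdot> run X A = n A K \<cdot> (((I (To A) \<cdot> u) \<otimes> (nK \<cdot> I K)) \<cdot> run X A)"
    by (simp only: idr[OF nK_hom] idl[OF u], ((subst as, (rule ty tyl)+)+)?, (rule refl)?)
  also have "\<dots> = n A K \<cdot> (((I (To A) \<otimes> nK) \<cdot> (u \<otimes> I K)) \<cdot> run X A)"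
    by (simp only: tnsm_comp[OF idn_hom[OF To_obj[OF A]] u nK_hom idn_hom[OF unt_obj]])
  also have "\<dots> = n A K \<cdot> ((I (To A) \<otimes> nK) \<cdot> (run X (To A) \<cdot> u))"
    by (simp only: run_nat[OF u], ((subst as, (rule ty tyl)+)+)?, (rule refl)?)
  also have "\<dots> = Tm (run X A) \<cdot> u" by (simp only: n_run[OF A], ((subst as, (rule ty tyl)+)+)?, (rule refl)?)
  finally have e: "(n A K \<cdot> (u \<otimes> nK)) \<cdot> run X A = Tm (run X A) \<cdot> u" .
  have UE: "(K, nK) \<in> EO" using XT_unt_obj by (simp add: XT_unt XT_Obj)
  show ?thesis using e run_hom[OF A] tns_EO[OF PE UE] PE by (simp add: XT_Hom XT_tns XT_unt)
qed

lemma XT_brd_hom: assumes PE: "(A,u) \<in> EO" and QE: "(B,v) \<in> EO"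
  shows "brd X A B \<in> Hom XT (tns XT (A,u) (B,v)) (tns XT (B,v) (A,u))"
proof -
  have A: "A \<in> Ob" and u: "u \<in> H (To A) A" using EO_pair[OF PE] by auto
  have B: "B \<in> Ob" and v: "v \<in> H (To B) B" using EO_pair[OF QE] by auto
  note tyl = A B u v
  have "(n A B \<cdot> (u \<otimes> v)) \<cdot> brd X A B = n A B \<cdot> (brd X (To A) (To B) \<cdot> (v \<otimes> u))"
    by (simp only: brd_nat[OF u v], ((subst as, (rule ty tyl)+)+)?, (rule refl)?)
  also have "\<dots> = Tm (brd X A B) \<cdot> (n B A \<cdot> (v \<otimes> u))"
    by (simp only: as[OF Tm_hom[OF brd_hom[OF A B]] n_hom[OF B A] tnsm_hom[OF v u], symmetric] n_brd[OF A B], ((subst as, (rule ty tyl)+)+)?, (rule refl)?)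
  finally have e: "(n A B \<cdot> (u \<otimes> v)) \<cdot> brd X A B = Tm (brd X A B) \<cdot> (n B A \<cdot> (v \<otimes> u))" .
  show ?thesis using e brd_hom[OF A B] tns_EO[OF PE QE] tns_EO[OF QE PE] by (simp add: XT_Hom XT_tns)
qed


lemma XT_asc_iso: assumes PE: "(A,u) \<in> EO" and QE: "(B,v) \<in> EO" and RE: "(D,w) \<in> EO"
  shows "iso_in XT (tns XT (tns XT (A,u) (B,v)) (D,w)) (tns XT (A,u) (tns XT (B,v) (D,w))) (asc XT (A,u) (B,v) (D,w))"
proof (rule XT_iso(2))
  show "iso_in X (fst (tns XT (tns XT (A, u) (B, v)) (D, w))) (fst (tns XT (A, u) (tns XT (B, v) (D, w))))
     (asc XT (A, u) (B, v) (D, w))"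
    using asc_iso EO_pair[OF PE] EO_pair[OF QE] EO_pair[OF RE] by (simp add: XT_tns XT_asc)
  show "asc XT (A, u) (B, v) (D, w) \<in> Hom XT (tns XT (tns XT (A, u) (B, v)) (D, w)) (tns XT (A, u) (tns XT (B, v) (D, w)))"
    using XT_asc_hom[OF PE QE RE] by (simp add: XT_asc)
qed

lemma XT_lun_iso: assumes PE: "(A,u) \<in> EO"
  shows "iso_in XT (tns XT (unt XT) (A,u)) (A,u) (lun XT (A,u))"
proof (rule XT_iso(2))
  show "iso_in X (fst (tns XT (unt XT) (A, u))) (fst (A, u)) (lun XT (A, u))"
    using lun_iso EO_pair[OF PE] by (simp add: XT_tns XT_lun XT_unt)
  show "lun XT (A, u) \<in> Hom XT (tns XT (unt XT) (A, u)) (A, u)"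
    using XT_lun_hom[OF PE] by (simp add: XT_lun)
qed

lemma XT_run_iso: assumes PE: "(A,u) \<in> EO"
  shows "iso_in XT (tns XT (A,u) (unt XT)) (A,u) (run XT (A,u))"
proof (rule XT_iso(2))
  show "iso_in X (fst (tns XT (A, u) (unt XT))) (fst (A, u)) (run XT (A, u))"
    using run_iso EO_pair[OF PE] by (simp add: XT_tns XT_run XT_unt)
  show "run XT (A, u) \<in> Hom XT (tns XT (A, u) (unt XT)) (A, u)"
    using XT_run_hom[OF PE] by (simp add: XT_run)
qed

lemma XT_asc_inv: assumes PE: "(A,u) \<in> EO" and QE: "(B,v) \<in> EO" and RE: "(D,w) \<in> EO"
  shows "asc_inv XT (A,u) (B,v) (D,w) = asc_inv X A B D"
proof -
  have "inv_in XT (tns XT (tns XT (A,u) (B,v)) (D,w)) (tns XT (A,u) (tns XT (B,v) (D,w))) (asc XT (A,u) (B,v) (D,w))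
     = inv_in X (fst (tns XT (tns XT (A,u) (B,v)) (D,w))) (fst (tns XT (A,u) (tns XT (B,v) (D,w)))) (asc XT (A,u) (B,v) (D,w))"
  proof (rule XT_iso(3))
    show "iso_in X (fst (tns XT (tns XT (A, u) (B, v)) (D, w))) (fst (tns XT (A, u) (tns XT (B, v) (D, w))))
       (asc XT (A, u) (B, v) (D, w))"
      using asc_iso EO_pair[OF PE] EO_pair[OF QE] EO_pair[OF RE] by (simp add: XT_tns XT_asc)
    show "asc XT (A, u) (B, v) (D, w) \<in> Hom XT (tns XT (tns XT (A, u) (B, v)) (D, w)) (tns XT (A, u) (tns XT (B, v) (D, w)))"
      using XT_asc_hom[OF PE QE RE] by (simp add: XT_asc)
  qed
  then show ?thesis unfolding asc_inv_def by (simp add: XT_tns XT_asc)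
qed

lemma smc_XT: "smc XT"
  unfolding smc_def
  apply (intro conjI)
  subgoal by (rule cat_XT)
  subgoal by (rule XT_unt_obj)
  subgoal using XT_tns_obj by blast
  subgoal using XT_tnsm_hom by blast
  subgoal by (simp add: XT_simps) (metis EO_D tnsm_id)
  subgoal apply (simp only: XT_cmp XT_tnsm) by (metis tnsm_comp XT_sub)
  subgoal apply (simp only: XT_Obj Ball_def split_paired_All) using XT_asc_iso by blast
  subgoal apply (simp only: XT_Obj Ball_def split_paired_All) using XT_lun_iso by blast
  subgoal apply (simp only: XT_Obj Ball_def split_paired_All) using XT_run_iso by blast
  subgoal apply (simp only: XT_Obj Ball_def split_paired_All) using XT_brd_hom by (simp add: XT_brd)
  subgoal apply (simp only: XT_cmp XT_tnsm XT_asc) by (metis asc_nat XT_sub)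
  subgoal apply (simp only: XT_cmp XT_tnsm XT_lun XT_idn XT_unt fst_conv) by (metis lun_nat XT_sub)
  subgoal apply (simp only: XT_cmp XT_tnsm XT_run XT_idn XT_unt fst_conv) by (metis run_nat XT_sub)
  subgoal apply (simp only: XT_cmp XT_tnsm XT_brd) by (metis brd_nat XT_sub)
  subgoal apply (simp only: XT_simps fst_conv) by (metis pent EO_D)
  subgoal apply (simp only: XT_simps fst_conv) by (metis tri EO_D)
  subgoal apply (simp only: XT_simps fst_conv) by (metis hex EO_D)
  subgoal apply (simp only: XT_simps fst_conv) by (metis symm EO_D)
  done

lemmas addl = addE[THEN conjunct2, THEN conjunct2]

lemma add_XT: "additive XT"
  unfolding additive_def
  apply (intro conjI)
  subgoal
  proof (simp only: XT_Obj Ball_def split_paired_All, intro allI impI)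
    fix A u B v assume PE: "(A,u) \<in> EO" and QE: "(B,v) \<in> EO"
    have A: "A \<in> Ob" and u: "u \<in> H (To A) A" using EO_pair[OF PE] by auto
    have B: "B \<in> Ob" and v: "v \<in> H (To B) B" using EO_pair[OF QE] by auto
    have "u \<cdot> zro X A B = Tm (zro X A B) \<cdot> v"
      using cmp_zro[OF u B] Tm_zro[OF A B] zro_cmp[OF v To_obj[OF A]] by simp
    then show "zro XT (A, u) (B, v) \<in> Hom XT (A, u) (B, v)"
      using PE QE zro_hom[OF A B] by (simp add: XT_zro XT_Hom)
  qed
  subgoal
  proof (intro allI impI)
    fix P Q f g assume fh: "f \<in> Hom XT P Q" and gh: "g \<in> Hom XT P Q"
    obtain A u where P: "P = (A,u)" by (cases P)
    obtain B v where Q: "Q = (B,v)" by (cases Q)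
    have f: "f \<in> H A B" and hf: "u \<cdot> f = Tm f \<cdot> v" and PE: "(A,u) \<in> EO" and QE: "(B,v) \<in> EO"
      using fh by (simp_all add: XT_Hom P Q)
    have g: "g \<in> H A B" and hg: "u \<cdot> g = Tm g \<cdot> v" using gh by (simp_all add: XT_Hom P Q)
    have u: "u \<in> H (To A) A" using EO_pair[OF PE] by auto
    have v: "v \<in> H (To B) B" using EO_pair[OF QE] by auto
    have "u \<cdot> pls X f g = Tm (pls X f g) \<cdot> v"
      using cmp_pls[OF u f g] pls_cmp[OF Tm_hom[OF f] Tm_hom[OF g] v] Tm_pls[OF f g] hf hg by simp
    then show "pls XT f g \<in> Hom XT P Q" using PE QE pls_hom[OF f g] by (simp add: XT_pls XT_Hom P Q)
  qed
  subgoal using addl[THEN conjunct1] XT_sub by (simp only: XT_simps) blast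
  subgoal using addl[THEN conjunct2, THEN conjunct1] XT_sub by (simp only: XT_simps) blast
  subgoal using addl[THEN conjunct2, THEN conjunct2, THEN conjunct1] XT_sub by (simp only: XT_simps) blast
  subgoal using addl[THEN conjunct2, THEN conjunct2, THEN conjunct2, THEN conjunct1] XT_sub by (simp only: XT_simps) blast
  subgoal using addl[THEN conjunct2, THEN conjunct2, THEN conjunct2, THEN conjunct2, THEN conjunct1] XT_sub EO_D
    by (simp only: XT_simps) blast
  subgoal using addl[THEN conjunct2, THEN conjunct2, THEN conjunct2, THEN conjunct2, THEN conjunct2, THEN conjunct1] XT_sub
    by (simp only: XT_simps) blast
  subgoal using addl[THEN conjunct2, THEN conjunct2, THEN conjunct2, THEN conjunct2, THEN conjunct2, THEN conjunct2, THEN conjunct1] XT_sub EO_D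
    by (simp only: XT_simps) blast
  subgoal using addl[THEN conjunct2, THEN conjunct2, THEN conjunct2, THEN conjunct2, THEN conjunct2, THEN conjunct2, THEN conjunct2, THEN conjunct1] XT_sub
    by (simp only: XT_simps) blast
  subgoal using addl[THEN conjunct2, THEN conjunct2, THEN conjunct2, THEN conjunct2, THEN conjunct2, THEN conjunct2, THEN conjunct2, THEN conjunct2] XT_sub EO_D
    by (simp only: XT_simps fst_conv) blast
  done


end

locale DCL = DCB +
  fixes lam
  assumes CM: "coalg_mdl X To Tm mu eta n nK Bo Bm dl ep De ee lam"
begin

lemmas lamE = CM[unfolded coalg_mdl_def]
lemmas lamNE = lamE[THEN conjunct1, unfolded nat_trans_def]
lemma lam_hom: "A \<in> Ob \<Longrightarrow> lam A \<in> H (To (Bo A)) (Bo (To A))" using lamNE[THEN conjunct1] by blast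
lemma lam_nat: "f \<in> H A B \<Longrightarrow> lam A \<cdot> Bm (Tm f) = Tm (Bm f) \<cdot> lam B" using lamNE[THEN conjunct2] by blast
lemmas lamL = lamE[THEN conjunct2]
lemma lam_mu: "A \<in> Ob \<Longrightarrow> mu (Bo A) \<cdot> lam A = Tm (lam A) \<cdot> (lam (To A) \<cdot> Bm (mu A))" using lamL by blast
lemma lam_eta: "A \<in> Ob \<Longrightarrow> eta (Bo A) \<cdot> lam A = Bm (eta A)" using lamL by blast
lemma lam_dl: "A \<in> Ob \<Longrightarrow> Tm (dl A) \<cdot> (lam (Bo A) \<cdot> Bm (lam A)) = lam A \<cdot> dl (To A)" using lamL by blast
lemma lam_ep: "A \<in> Ob \<Longrightarrow> lam A \<cdot> ep (To A) = Tm (ep A)" using lamL by blast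
lemma lam_De: "A \<in> Ob \<Longrightarrow> Tm (De A) \<cdot> (n (Bo A) (Bo A) \<cdot> (lam A \<otimes> lam A)) = lam A \<cdot> De (To A)" using lamL by blast
lemma lam_ee: "A \<in> Ob \<Longrightarrow> Tm (ee A) \<cdot> nK = lam A \<cdot> ee (To A)" using lamL by blast

lemmas ty2 = ty lam_hom

abbreviation LB where "LB \<equiv> lift_bang X Bo Bm lam"
lemma LB_eq: "LB (A,v) = (Bo A, lam A \<cdot> Bm v)" by (simp add: lift_bang_def)

lemma LB_EO: assumes PE: "(A,v) \<in> EO" shows "LB (A,v) \<in> EO"
proof -
  have A: "A \<in> Ob" and v: "v \<in> H (To A) A" and ve: "eta A \<cdot> v = I A" and vm: "mu A \<cdot> v = Tm v \<cdot> v"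
    using PE by (simp_all add: EO_iff)
  note tyl = A v
  have e1: "eta (Bo A) \<cdot> (lam A \<cdot> Bm v) = I (Bo A)"
    by (simp only: as[OF eta_hom[OF Bo_obj[OF A]] lam_hom[OF A] Bm_hom[OF v], symmetric] lam_eta[OF A]
        Bm_comp[OF eta_hom[OF A] v, symmetric] ve Bm_id[OF A])
  have "mu (Bo A) \<cdot> (lam A \<cdot> Bm v) = Tm (lam A) \<cdot> (lam (To A) \<cdot> Bm (mu A \<cdot> v))"
    by (simp only: as[OF mu_hom[OF Bo_obj[OF A]] lam_hom[OF A] Bm_hom[OF v], symmetric] lam_mu[OF A]
        Bm_comp[OF mu_hom[OF A] v], ((subst as, (rule ty2 tyl)+)+)?, (rule refl)?)
  also have "\<dots> = Tm (lam A) \<cdot> ((lam (To A) \<cdot> Bm (Tm v)) \<cdot> Bm v)"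
    by (simp only: vm Bm_comp[OF Tm_hom[OF v] v], ((subst as, (rule ty2 tyl)+)+)?, (rule refl)?)
  also have "\<dots> = Tm (lam A \<cdot> Bm v) \<cdot> (lam A \<cdot> Bm v)"
    by (simp only: lam_nat[OF v] Tm_comp[OF lam_hom[OF A] Bm_hom[OF v]], ((subst as, (rule ty2 tyl)+)+)?, (rule refl)?)
  finally have e2: "mu (Bo A) \<cdot> (lam A \<cdot> Bm v) = Tm (lam A \<cdot> Bm v) \<cdot> (lam A \<cdot> Bm v)" .
  have "lam A \<cdot> Bm v \<in> H (To (Bo A)) (Bo A)" by (rule ty2 tyl)+
  then show ?thesis using e1 e2 A Bo_obj by (simp add: LB_eq EO_iff)
qed

lemma LB_EO': "P \<in> EO \<Longrightarrow> LB P \<in> EO" using LB_EO[of "fst P" "snd P"] by simp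

lemma Bm_XT_hom: assumes fh: "f \<in> Hom XT P Q" shows "Bm f \<in> Hom XT (LB P) (LB Q)"
proof -
  obtain A u where P: "P = (A,u)" by (cases P)
  obtain B v where Q: "Q = (B,v)" by (cases Q)
  have f: "f \<in> H A B" and hf: "u \<cdot> f = Tm f \<cdot> v" and PE: "(A,u) \<in> EO" and QE: "(B,v) \<in> EO"
    using fh by (simp_all add: XT_Hom P Q)
  have A: "A \<in> Ob" and u: "u \<in> H (To A) A" using EO_pair[OF PE] by auto
  have B: "B \<in> Ob" and v: "v \<in> H (To B) B" using EO_pair[OF QE] by auto
  note tyl = A B u v f
  have "(lam A \<cdot> Bm u) \<cdot> Bm f = lam A \<cdot> (Bm (Tm f) \<cdot> Bm v)"
    by (((subst as, (rule ty2 tyl)+)+)?, (rule refl)?, simp only: Bm_comp[OF u f, symmetric] hf Bm_comp[OF Tm_hom[OF f] v])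
  also have "\<dots> = Tm (Bm f) \<cdot> (lam B \<cdot> Bm v)"
    by (simp only: as[OF lam_hom[OF A] Bm_hom[OF Tm_hom[OF f]] Bm_hom[OF v], symmetric] lam_nat[OF f], ((subst as, (rule ty2 tyl)+)+)?, (rule refl)?)
  finally have e: "(lam A \<cdot> Bm u) \<cdot> Bm f = Tm (Bm f) \<cdot> (lam B \<cdot> Bm v)" .
  show ?thesis using e LB_EO[OF PE] LB_EO[OF QE] Bm_hom[OF f] by (simp add: XT_Hom P Q LB_eq)
qed

lemma dl_XT_hom: assumes PE: "(A,v) \<in> EO" shows "dl A \<in> Hom XT (LB (A,v)) (LB (LB (A,v)))"
proof -
  have A: "A \<in> Ob" and v: "v \<in> H (To A) A" using EO_pair[OF PE] by auto
  note tyl = A v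
  have "(lam A \<cdot> Bm v) \<cdot> dl A = lam A \<cdot> (dl (To A) \<cdot> Bm (Bm v))" by (simp only: dl_nat[OF v], ((subst as, (rule ty2 tyl)+)+)?, (rule refl)?)
  also have "\<dots> = Tm (dl A) \<cdot> (lam (Bo A) \<cdot> (Bm (lam A) \<cdot> Bm (Bm v)))"
    by (simp only: as[OF lam_hom[OF A] dl_hom[OF To_obj[OF A]] Bm_hom[OF Bm_hom[OF v]], symmetric] lam_dl[OF A, symmetric], ((subst as, (rule ty2 tyl)+)+)?, (rule refl)?)
  also have "\<dots> = Tm (dl A) \<cdot> (lam (Bo A) \<cdot> Bm (lam A \<cdot> Bm v))"
    by (simp only: Bm_comp[OF lam_hom[OF A] Bm_hom[OF v]])
  finally have e: "(lam A \<cdot> Bm v) \<cdot> dl A = Tm (dl A) \<cdot> (lam (Bo A) \<cdot> Bm (lam A \<cdot> Bm v))" .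
  show ?thesis using e LB_EO[OF PE] LB_EO'[OF LB_EO[OF PE]] dl_hom[OF A] by (simp add: XT_Hom LB_eq)
qed

lemma ep_XT_hom: assumes PE: "(A,v) \<in> EO" shows "ep A \<in> Hom XT (LB (A,v)) (A,v)"
proof -
  have A: "A \<in> Ob" and v: "v \<in> H (To A) A" using EO_pair[OF PE] by auto
  note tyl = A v
  have "(lam A \<cdot> Bm v) \<cdot> ep A = lam A \<cdot> (ep (To A) \<cdot> v)" by (simp only: ep_nat[OF v], ((subst as, (rule ty2 tyl)+)+)?, (rule refl)?)
  also have "\<dots> = Tm (ep A) \<cdot> v" by (simp only: as[OF lam_hom[OF A] ep_hom[OF To_obj[OF A]] v, symmetric] lam_ep[OF A])
  finally have e: "(lam A \<cdot> Bm v) \<cdot> ep A = Tm (ep A) \<cdot> v" .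
  show ?thesis using e LB_EO[OF PE] PE ep_hom[OF A] by (simp add: XT_Hom LB_eq)
qed

lemma De_XT_hom: assumes PE: "(A,v) \<in> EO" shows "De A \<in> Hom XT (LB (A,v)) (tns XT (LB (A,v)) (LB (A,v)))"
proof -
  have A: "A \<in> Ob" and v: "v \<in> H (To A) A" using EO_pair[OF PE] by auto
  note tyl = A v
  have "(lam A \<cdot> Bm v) \<cdot> De A = lam A \<cdot> (De (To A) \<cdot> (Bm v \<otimes> Bm v))" by (simp only: De_nat[OF v], ((subst as, (rule ty2 tyl)+)+)?, (rule refl)?)
  also have "\<dots> = Tm (De A) \<cdot> (n (Bo A) (Bo A) \<cdot> ((lam A \<otimes> lam A) \<cdot> (Bm v \<otimes> Bm v)))"
    by (simp only: as[OF lam_hom[OF A] De_hom[OF To_obj[OF A]] tnsm_hom[OF Bm_hom[OF v] Bm_hom[OF v]], symmetric]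
        lam_De[OF A, symmetric], ((subst as, (rule ty2 tyl)+)+)?, (rule refl)?)
  also have "\<dots> = Tm (De A) \<cdot> (n (Bo A) (Bo A) \<cdot> ((lam A \<cdot> Bm v) \<otimes> (lam A \<cdot> Bm v)))"
    by (simp only: tnsm_comp[OF lam_hom[OF A] Bm_hom[OF v] lam_hom[OF A] Bm_hom[OF v]])
  finally have e: "(lam A \<cdot> Bm v) \<cdot> De A = Tm (De A) \<cdot> (n (Bo A) (Bo A) \<cdot> ((lam A \<cdot> Bm v) \<otimes> (lam A \<cdot> Bm v)))" .
  show ?thesis using e LB_EO[OF PE] tns_EO[OF LB_EO[OF PE, unfolded LB_eq] LB_EO[OF PE, unfolded LB_eq]] De_hom[OF A]
    by (simp add: XT_Hom LB_eq XT_tns)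
qed

lemma ee_XT_hom: assumes PE: "(A,v) \<in> EO" shows "ee A \<in> Hom XT (LB (A,v)) (unt XT)"
proof -
  have A: "A \<in> Ob" and v: "v \<in> H (To A) A" using EO_pair[OF PE] by auto
  note tyl = A v
  have "(lam A \<cdot> Bm v) \<cdot> ee A = lam A \<cdot> (ee (To A) \<cdot> I K)" by (simp only: ee_nat[OF v], ((subst as, (rule ty2 tyl)+)+)?, (rule refl)?)
  also have "\<dots> = Tm (ee A) \<cdot> nK" by (simp only: idr[OF ee_hom[OF To_obj[OF A]]] lam_ee[OF A])
  finally have e: "(lam A \<cdot> Bm v) \<cdot> ee A = Tm (ee A) \<cdot> nK" .
  have UE: "(K, nK) \<in> EO" using XT_unt_obj by (simp add: XT_unt XT_Obj)
  show ?thesis using e LB_EO[OF PE] UE ee_hom[OF A] by (simp add: XT_Hom LB_eq XT_unt)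
qed




lemma LB_gen: "LB P = (Bo (fst P), lam (fst P) \<cdot> Bm (snd P))" by (cases P) (simp add: LB_eq)

lemmas cmlaws_b = cmlaws[THEN bspec]

lemma cm_XT: "coalgebra_modality XT LB Bm (\<lambda>(A, v). dl A) (\<lambda>(A, v). ep A) (\<lambda>(A, v). De A) (\<lambda>(A, v). ee A)"
  unfolding coalgebra_modality_def nat_trans_def functor_on_def
  apply (intro conjI)
  subgoal by (simp only: XT_Obj) (metis LB_EO')
  subgoal using Bm_XT_hom by blast
  subgoal by (simp add: XT_idn LB_gen XT_Obj) (metis EO_D Bm_id)
  subgoal by (simp only: XT_cmp) (metis Bm_comp XT_sub)
  subgoal apply (simp only: XT_Obj Ball_def split_paired_All case_prod_conv) using dl_XT_hom by blast
  subgoal apply (simp only: XT_cmp case_prod_beta) by (metis dl_nat XT_sub)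
  subgoal apply (simp only: XT_Obj Ball_def split_paired_All case_prod_conv) using ep_XT_hom by blast
  subgoal apply (simp only: XT_cmp case_prod_beta) by (metis ep_nat XT_sub)
  subgoal apply (simp only: XT_Obj Ball_def split_paired_All case_prod_conv) using De_XT_hom by blast
  subgoal apply (simp only: XT_cmp XT_tnsm case_prod_beta) by (metis De_nat XT_sub)
  subgoal apply (simp only: XT_Obj Ball_def split_paired_All case_prod_conv) using ee_XT_hom by blast
  subgoal apply (simp only: XT_cmp XT_idn XT_unt fst_conv case_prod_beta) by (metis ee_nat XT_sub)
  subgoal
    apply (simp only: XT_Obj Ball_def split_paired_All)
    apply (intro allI impI)
    apply (simp only: XT_simps LB_eq case_prod_conv fst_conv)
    apply (drule EO_pair)
    apply (erule conjE)
    apply (drule cmlaws_b)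
    apply assumption
    done
  done

lemma d_XT_hom: assumes DCc: "differential_mdl_cond X To Tm n Bo d lam" and PE: "(A,v) \<in> EO"
  shows "d A \<in> Hom XT (tns XT (LB (A,v)) (A,v)) (LB (A,v))"
proof -
  have A: "A \<in> Ob" and v: "v \<in> H (To A) A" using EO_pair[OF PE] by auto
  have dc: "n (Bo A) A \<cdot> ((lam A \<otimes> I (To A)) \<cdot> d (To A)) = Tm (d A) \<cdot> lam A"
    using DCc A unfolding differential_mdl_cond_def by blast
  note tyl = A v
  have "(n (Bo A) A \<cdot> ((lam A \<cdot> Bm v) \<otimes> v)) \<cdot> d A = n (Bo A) A \<cdot> (((lam A \<cdot> Bm v) \<otimes> (I (To A) \<cdot> v)) \<cdot> d A)"
    by (simp only: idl[OF v], ((subst as, (rule ty2 tyl)+)+)?, (rule refl)?)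
  also have "\<dots> = n (Bo A) A \<cdot> (((lam A \<otimes> I (To A)) \<cdot> (Bm v \<otimes> v)) \<cdot> d A)"
    by (simp only: tnsm_comp[OF lam_hom[OF A] Bm_hom[OF v] idn_hom[OF To_obj[OF A]] v])
  also have "\<dots> = n (Bo A) A \<cdot> ((lam A \<otimes> I (To A)) \<cdot> (d (To A) \<cdot> Bm v))"
    by (simp only: d_nat[OF v], ((subst as, (rule ty2 tyl)+)+)?, (rule refl)?)
  also have "\<dots> = Tm (d A) \<cdot> (lam A \<cdot> Bm v)"
    by (simp only: as[OF Tm_hom[OF d_hom[OF A]] lam_hom[OF A] Bm_hom[OF v], symmetric] dc[symmetric], ((subst as, (rule ty2 tyl)+)+)?, (rule refl)?)
  finally have e: "(n (Bo A) A \<cdot> ((lam A \<cdot> Bm v) \<otimes> v)) \<cdot> d A = Tm (d A) \<cdot> (lam A \<cdot> Bm v)" .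
  show ?thesis using e LB_EO[OF PE] tns_EO[OF LB_EO[OF PE, unfolded LB_eq] PE] d_hom[OF A]
    by (simp add: XT_Hom LB_eq XT_tns)
qed

lemma TA_EO: "A \<in> Ob \<Longrightarrow> (To A, mu A) \<in> EO"
  using To_obj mu_hom mu_eta1 mu_assoc by (simp add: EO_iff)

lemma diff_from_hom: assumes A: "A \<in> Ob"
  and Hh: "d (To A) \<in> Hom XT (tns XT (LB (To A, mu A)) (To A, mu A)) (LB (To A, mu A))"
  shows "n (Bo A) A \<cdot> ((lam A \<otimes> I (To A)) \<cdot> d (To A)) = Tm (d A) \<cdot> lam A"
proof -
  note tyl = A
  have H: "(n (Bo (To A)) (To A) \<cdot> ((lam (To A) \<cdot> Bm (mu A)) \<otimes> mu A)) \<cdot> d (To A)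
      = Tm (d (To A)) \<cdot> (lam (To A) \<cdot> Bm (mu A))"
    using Hh by (simp add: XT_Hom XT_tns LB_eq)
  have H': "n (Bo (To A)) (To A) \<cdot> (((lam (To A) \<cdot> Bm (mu A)) \<otimes> mu A) \<cdot> d (To A))
      = Tm (d (To A)) \<cdot> (lam (To A) \<cdot> Bm (mu A))"
  proof -
    have "n (Bo (To A)) (To A) \<cdot> (((lam (To A) \<cdot> Bm (mu A)) \<otimes> mu A) \<cdot> d (To A))
       = (n (Bo (To A)) (To A) \<cdot> ((lam (To A) \<cdot> Bm (mu A)) \<otimes> mu A)) \<cdot> d (To A)" by (((subst as, (rule ty2 tyl)+)+)?, (rule refl)?)
    also have "\<dots> = Tm (d (To A)) \<cdot> (lam (To A) \<cdot> Bm (mu A))" by (rule H)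
    finally show ?thesis .
  qed
  have "n (Bo A) A \<cdot> ((lam A \<otimes> I (To A)) \<cdot> d (To A))
     = n (Bo A) A \<cdot> (((lam A \<cdot> Bm (Tm (eta A) \<cdot> mu A)) \<otimes> (Tm (eta A) \<cdot> mu A)) \<cdot> d (To A))"
    by (simp only: mu_eta2[OF A] Bm_id[OF To_obj[OF A]] idr[OF lam_hom[OF A]])
  also have "\<dots> = n (Bo A) A \<cdot> (((Tm (Bm (eta A)) \<otimes> Tm (eta A)) \<cdot> ((lam (To A) \<cdot> Bm (mu A)) \<otimes> mu A)) \<cdot> d (To A))"
    by (simp only: Bm_comp[OF Tm_hom[OF eta_hom[OF A]] mu_hom[OF A]]
        tnsm_comp[OF Tm_hom[OF Bm_hom[OF eta_hom[OF A]]] comp_hom[OF lam_hom[OF To_obj[OF A]] Bm_hom[OF mu_hom[OF A]]]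
          Tm_hom[OF eta_hom[OF A]] mu_hom[OF A], symmetric]
        as[OF lam_hom[OF A] Bm_hom[OF Tm_hom[OF eta_hom[OF A]]] Bm_hom[OF mu_hom[OF A]], symmetric]
        lam_nat[OF eta_hom[OF A]], ((subst as, (rule ty2 tyl)+)+)?, (rule refl)?)
  also have "\<dots> = (Tm (Bm (eta A) \<otimes> eta A) \<cdot> n (Bo (To A)) (To A)) \<cdot> (((lam (To A) \<cdot> Bm (mu A)) \<otimes> mu A) \<cdot> d (To A))"
    by (simp only: n_nat[OF Bm_hom[OF eta_hom[OF A]] eta_hom[OF A]], ((subst as, (rule ty2 tyl)+)+)?, (rule refl)?)
  also have "\<dots> = Tm (Bm (eta A) \<otimes> eta A) \<cdot> (n (Bo (To A)) (To A) \<cdot> (((lam (To A) \<cdot> Bm (mu A)) \<otimes> mu A) \<cdot> d (To A)))"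
    by (((subst as, (rule ty2 tyl)+)+)?, (rule refl)?)
  also have "\<dots> = Tm (Bm (eta A) \<otimes> eta A) \<cdot> (Tm (d (To A)) \<cdot> (lam (To A) \<cdot> Bm (mu A)))"
    by (simp only: H')
  also have "\<dots> = Tm ((Bm (eta A) \<otimes> eta A) \<cdot> d (To A)) \<cdot> (lam (To A) \<cdot> Bm (mu A))"
    by (simp only: Tm_comp[OF tnsm_hom[OF Bm_hom[OF eta_hom[OF A]] eta_hom[OF A]] d_hom[OF To_obj[OF A]]], ((subst as, (rule ty2 tyl)+)+)?, (rule refl)?)
  also have "\<dots> = Tm (d A \<cdot> Bm (eta A)) \<cdot> (lam (To A) \<cdot> Bm (mu A))"
    by (simp only: d_nat[OF eta_hom[OF A]])
  also have "\<dots> = Tm (d A) \<cdot> ((lam A \<cdot> Bm (Tm (eta A))) \<cdot> Bm (mu A))"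
    by (simp only: Tm_comp[OF d_hom[OF A] Bm_hom[OF eta_hom[OF A]]] lam_nat[OF eta_hom[OF A]], ((subst as, (rule ty2 tyl)+)+)?, (rule refl)?)
  also have "\<dots> = Tm (d A) \<cdot> lam A"
    by (simp only: as[OF lam_hom[OF A] Bm_hom[OF Tm_hom[OF eta_hom[OF A]]] Bm_hom[OF mu_hom[OF A]]]
        Bm_comp[OF Tm_hom[OF eta_hom[OF A]] mu_hom[OF A], symmetric] mu_eta2[OF A] Bm_id[OF To_obj[OF A]]
        idr[OF lam_hom[OF A]])
  finally show ?thesis .
qed


lemma XT_deriv: assumes DCc: "differential_mdl_cond X To Tm n Bo d lam"
  and dtv: "\<And>P. P \<in> Obj XT \<Longrightarrow> dt P = d (fst P)"
  shows "deriving_transformation XT LB Bm (\<lambda>(A, v). dl A) (\<lambda>(A, v). ep A) (\<lambda>(A, v). De A) (\<lambda>(A, v). ee A) dt"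
  unfolding deriving_transformation_def nat_trans_def
  apply (intro conjI)
  subgoal
  proof (simp only: XT_Obj Ball_def split_paired_All, intro allI impI)
    fix a b assume PE: "(a,b) \<in> EO"
    then have "dt (a,b) = d a" using dtv XT_Obj by simp
    then show "dt (a, b) \<in> Hom XT (tns XT (LB (a, b)) (a, b)) (LB (a, b))" using d_XT_hom[OF DCc PE] by simp
  qed
  subgoal
  proof (intro allI impI)
    fix P Q f assume fh: "f \<in> Hom XT P Q"
    then have "P \<in> Obj XT" "Q \<in> Obj XT" by (auto simp: XT_Hom XT_Obj)
    then show "cmp XT (dt P) (Bm f) = cmp XT (tnsm XT (Bm f) f) (dt Q)"
      using dtv d_nat[OF XT_sub[OF fh]] by (simp add: XT_cmp XT_tnsm)
  qed
  apply (simp only: XT_Obj Ball_def split_paired_All)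
  apply (intro allI impI)
  subgoal premises PE for a b
  proof -
    have a: "a \<in> Ob" using EO_pair[OF PE] by simp
    have LE: "(Bo a, lam a \<cdot> Bm b) \<in> EO" using LB_EO[OF PE] by (simp add: LB_eq)
    have d1: "dt (a,b) = d a" using dtv PE XT_Obj by simp
    have d2: "dt (Bo a, lam a \<cdot> Bm b) = d (Bo a)" using dtv LE XT_Obj by simp
    note i1 = XT_asc_inv[OF LE PE LE] and i2 = XT_asc_inv[OF LE PE PE]
    from dlaws[THEN bspec, OF a] show ?thesis
      by (simp only: XT_simps LB_eq case_prod_conv fst_conv d1 d2 i1 i2)
  qed
  done

lemma fwd: assumes DCc: "differential_mdl_cond X To Tm n Bo d lam"
  shows "deriving_transformation XT LB Bm (\<lambda>(A, v). dl A) (\<lambda>(A, v). ep A) (\<lambda>(A, v). De A) (\<lambda>(A, v). ee A)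
           (\<lambda>Av\<in>Obj XT. d (fst Av))"
    and "differential_category XT LB Bm (\<lambda>(A, v). dl A) (\<lambda>(A, v). ep A) (\<lambda>(A, v). De A) (\<lambda>(A, v). ee A)
           (\<lambda>Av\<in>Obj XT. d (fst Av))"
proof -
  show D: "deriving_transformation XT LB Bm (\<lambda>(A, v). dl A) (\<lambda>(A, v). ep A) (\<lambda>(A, v). De A) (\<lambda>(A, v). ee A)
           (\<lambda>Av\<in>Obj XT. d (fst Av))"
    by (rule XT_deriv[OF DCc]) simp
  show "differential_category XT LB Bm (\<lambda>(A, v). dl A) (\<lambda>(A, v). ep A) (\<lambda>(A, v). De A) (\<lambda>(A, v). ee A)
           (\<lambda>Av\<in>Obj XT. d (fst Av))"
    unfolding differential_category_def additive_smc_def using smc_XT add_XT cm_XT D by blast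
qed

lemma bwd: assumes DT: "deriving_transformation XT LB Bm (\<lambda>(A, v). dl A) (\<lambda>(A, v). ep A) (\<lambda>(A, v). De A) (\<lambda>(A, v). ee A) dt"
  and dtv: "\<forall>Av\<in>Obj XT. dt Av = d (fst Av)"
  shows "differential_mdl_cond X To Tm n Bo d lam"
  unfolding differential_mdl_cond_def
proof
  fix A assume A: "A \<in> Ob"
  have h: "\<forall>P\<in>Obj XT. dt P \<in> Hom XT (tns XT (LB P) P) (LB P)"
    using DT[unfolded deriving_transformation_def, THEN conjunct1, unfolded nat_trans_def, THEN conjunct1] .
  have TE: "(To A, mu A) \<in> Obj XT" using TA_EO[OF A] by (simp add: XT_Obj)
  have "dt (To A, mu A) = d (To A)" using dtv TE by simp
  with h TE have "d (To A) \<in> Hom XT (tns XT (LB (To A, mu A)) (To A, mu A)) (LB (To A, mu A))" by metis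
  then show "n (Bo A) A \<cdot> ((lam A \<otimes> I (To A)) \<cdot> d (To A)) = Tm (d A) \<cdot> lam A" by (rule diff_from_hom[OF A])
qed

end

theorem proposition7p15:
  fixes X :: "('o, 'm) smcat"
    and Bo :: "'o \<Rightarrow> 'o" and Bm :: "'m \<Rightarrow> 'm"
    and dl ep De ee d :: "'o \<Rightarrow> 'm"
    and To :: "'o \<Rightarrow> 'o" and Tm :: "'m \<Rightarrow> 'm"
    and mu eta :: "'o \<Rightarrow> 'm" and n :: "'o \<Rightarrow> 'o \<Rightarrow> 'm" and nK :: "'m"
  assumes "differential_category X Bo Bm dl ep De ee d"
    and "sc_monad X To Tm mu eta n nK"
    and "additive_functor X To Tm"
  defines "XT \<equiv> em X To Tm mu eta n nK"
  defines "DL \<equiv> {lam \<in> extensional (Obj X).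
             differential_mdl X To Tm mu eta n nK Bo Bm dl ep De ee d lam}"
  defines "LD \<equiv> {(lam, dt). lam \<in> extensional (Obj X) \<and>
             coalg_mdl X To Tm mu eta n nK Bo Bm dl ep De ee lam \<and>
             dt \<in> extensional (Obj XT) \<and>
             deriving_transformation XT (lift_bang X Bo Bm lam) Bm
               (\<lambda>(A, v). dl A) (\<lambda>(A, v). ep A) (\<lambda>(A, v). De A) (\<lambda>(A, v). ee A) dt \<and>
             (\<forall>Av\<in>Obj XT. dt Av = d (fst Av))}"
  shows "bij_betw (\<lambda>lam. (lam, \<lambda>Av\<in>Obj XT. d (fst Av))) DL LD \<and>
         (\<forall>lam\<in>DL. differential_category XT (lift_bang X Bo Bm lam) Bm
               (\<lambda>(A, v). dl A) (\<lambda>(A, v). ep A) (\<lambda>(A, v). De A) (\<lambda>(A, v). ee A)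
               (\<lambda>Av\<in>Obj XT. d (fst Av)))"
proof -
  have D0: "DCB X Bo Bm dl ep De ee d To Tm mu eta n nK" using assms(1-3) by (rule DCB.intro)
  have DI: "DCL X Bo Bm dl ep De ee d To Tm mu eta n nK lam" if "coalg_mdl X To Tm mu eta n nK Bo Bm dl ep De ee lam" for lam
    by (rule DCL.intro[OF D0 DCL_axioms.intro[OF that]])
  have F1: "deriving_transformation XT (lift_bang X Bo Bm lam) Bm
               (\<lambda>(A, v). dl A) (\<lambda>(A, v). ep A) (\<lambda>(A, v). De A) (\<lambda>(A, v). ee A) (\<lambda>Av\<in>Obj XT. d (fst Av))"
    and F2: "differential_category XT (lift_bang X Bo Bm lam) Bm
               (\<lambda>(A, v). dl A) (\<lambda>(A, v). ep A) (\<lambda>(A, v). De A) (\<lambda>(A, v). ee A) (\<lambda>Av\<in>Obj XT. d (fst Av))"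
    if "lam \<in> DL" for lam
  proof -
    from that have c: "coalg_mdl X To Tm mu eta n nK Bo Bm dl ep De ee lam"
      and dc: "differential_mdl_cond X To Tm n Bo d lam"
      unfolding DL_def differential_mdl_def by auto
    show "deriving_transformation XT (lift_bang X Bo Bm lam) Bm
               (\<lambda>(A, v). dl A) (\<lambda>(A, v). ep A) (\<lambda>(A, v). De A) (\<lambda>(A, v). ee A) (\<lambda>Av\<in>Obj XT. d (fst Av))"
      unfolding XT_def by (rule DCL.fwd(1)[OF DI[OF c] dc])
    show "differential_category XT (lift_bang X Bo Bm lam) Bm
               (\<lambda>(A, v). dl A) (\<lambda>(A, v). ep A) (\<lambda>(A, v). De A) (\<lambda>(A, v). ee A) (\<lambda>Av\<in>Obj XT. d (fst Av))"
      unfolding XT_def by (rule DCL.fwd(2)[OF DI[OF c] dc])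
  qed
  have inj: "inj_on (\<lambda>lam. (lam, \<lambda>Av\<in>Obj XT. d (fst Av))) DL" by (rule inj_onI) simp
  have sub1: "(\<lambda>lam. (lam, \<lambda>Av\<in>Obj XT. d (fst Av))) ` DL \<subseteq> LD"
  proof (rule image_subsetI)
    fix lam assume l: "lam \<in> DL"
    then have "lam \<in> extensional (Obj X)" "coalg_mdl X To Tm mu eta n nK Bo Bm dl ep De ee lam"
      unfolding DL_def differential_mdl_def by auto
    then show "(lam, \<lambda>Av\<in>Obj XT. d (fst Av)) \<in> LD" unfolding LD_def using F1[OF l] by simp
  qed
  have sub2: "LD \<subseteq> (\<lambda>lam. (lam, \<lambda>Av\<in>Obj XT. d (fst Av))) ` DL"
  proof
    fix p assume p: "p \<in> LD"
    obtain lam dt where pe: "p = (lam, dt)" by (cases p)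
    from p have le: "lam \<in> extensional (Obj X)" and c: "coalg_mdl X To Tm mu eta n nK Bo Bm dl ep De ee lam"
      and de: "dt \<in> extensional (Obj XT)"
      and DT: "deriving_transformation XT (lift_bang X Bo Bm lam) Bm
               (\<lambda>(A, v). dl A) (\<lambda>(A, v). ep A) (\<lambda>(A, v). De A) (\<lambda>(A, v). ee A) dt"
      and dtv: "\<forall>Av\<in>Obj XT. dt Av = d (fst Av)"
      unfolding LD_def pe by auto
    have dc: "differential_mdl_cond X To Tm n Bo d lam"
      by (rule DCL.bwd[OF DI[OF c]]) (use DT dtv in \<open>simp_all add: XT_def\<close>)
    have "lam \<in> DL" unfolding DL_def differential_mdl_def using le c dc by simp
    moreover have "dt = (\<lambda>Av\<in>Obj XT. d (fst Av))"
      by (rule extensionalityI[OF de restrict_extensional]) (simp add: dtv)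
    ultimately show "p \<in> (\<lambda>lam. (lam, \<lambda>Av\<in>Obj XT. d (fst Av))) ` DL" unfolding pe by blast
  qed
  show ?thesis unfolding bij_betw_def using inj sub1 sub2 F2 by blast
qed

end
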